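(* Let $1<p<N$, let $(\delta_n)_{n\in\mathbb{N}}$ be a sequence of positive numbers with $\delta_n\to 0$, and let $(u_n)_{n\in\mathbb{N}}$ be a sequence of radially symmetric functions on $\mathbb{R}^N$ that are non-increasing in $|x|$. Assume that $(u_n)$ is bounded in $L^p(\mathbb{R}^N)$ and that $(I_{\delta_n}(u_n))_{n\in\mathbb{N}}$ is bounded. Then $(u_n)$ is pre-compact in $L^r(\mathbb{R}^N)$ for every $p<r<\frac{Np}{N-p}$.
   Context: For $\delta>0$ and measurable $u:\mathbb{R}^N\to\mathbb{R}$, $I_\delta(u):=\iint_{\{(x,y):\ |u(y)-u(x)|>\delta\}}\frac{\delta^p}{|x-y|^{N+p}}\,dx\,dy\in[0,+\infty]$. *)

theory Defs
  imports "HOL-Analysis.Analysis"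
begin

definition I_delta :: "real \<Rightarrow> real \<Rightarrow> ('a::euclidean_space \<Rightarrow> real) \<Rightarrow> ennreal" where
  "I_delta p \<delta> u =
     (\<integral>\<^sup>+ z. indicator {(x, y). \<bar>u y - u x\<bar> > \<delta>} z *
        ennreal (\<delta> powr p / norm (fst z - snd z) powr (real DIM('a) + p))
      \<partial>(lborel \<Otimes>\<^sub>M lborel))"

definition Lr_pow :: "real \<Rightarrow> ('a::euclidean_space \<Rightarrow> real) \<Rightarrow> ennreal" where
  "Lr_pow r f = (\<integral>\<^sup>+ x. ennreal (\<bar>f x\<bar> powr r) \<partial>lborel)"

definition precompact_Lr :: "real \<Rightarrow> (nat \<Rightarrow> 'a::euclidean_space \<Rightarrow> real) \<Rightarrow> bool" where
  "precompact_Lr r u \<longleftrightarrow>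
     (\<forall>n. u n \<in> borel_measurable lebesgue \<and> Lr_pow r (u n) < \<infinity>) \<and>
     (\<forall>s. strict_mono s \<longrightarrow>
        (\<exists>(t :: nat \<Rightarrow> nat) (g :: 'a \<Rightarrow> real). strict_mono t \<and> g \<in> borel_measurable lebesgue \<and> Lr_pow r g < \<infinity> \<and>
               ((\<lambda>k. Lr_pow r (\<lambda>x. u (s (t k)) x - g x)) \<longlongrightarrow> 0) sequentially))"

end

theory Submission
  imports Defs "HOL-Library.Diagonal_Subsequence" "HOL-Probability.Probability"
begin


lemma null_sphere: "sphere (c::'a::euclidean_space) r \<in> null_sets lborel"
  using negligible_sphere[of c r]
  by (auto simp: null_sets_completion_iff negligible_iff_null_sets negligible_convex_frontier)

lemma emeasure_shell:
  fixes \<alpha> \<beta> :: real assumes "0 \<le> \<alpha>" "\<alpha> \<le> \<beta>"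
  shows "emeasure lborel {x::'a::euclidean_space. \<alpha> < norm x \<and> norm x < \<beta>}
       = ennreal (unit_ball_vol DIM('a) * (\<beta>^DIM('a) - \<alpha>^DIM('a)))"
proof (cases "\<alpha> = \<beta>")
  case True 
  then have "{x::'a. \<alpha> < norm x \<and> norm x < \<beta>} = {}" by auto
  then have "emeasure lborel {x::'a. \<alpha> < norm x \<and> norm x < \<beta>} = 0" by (metis emeasure_empty)
  then show ?thesis using True by simp
next
  case False
  have eq: "{x::'a. \<alpha> < norm x \<and> norm x < \<beta>} = ball 0 \<beta> - cball 0 \<alpha>" by auto
  have sub: "cball (0::'a) \<alpha> \<subseteq> ball 0 \<beta>" using False assms by auto
  have "emeasure lborel (ball (0::'a) \<beta> - cball 0 \<alpha>) = emeasure lborel (ball (0::'a) \<beta>) - emeasure lborel (cball (0::'a) \<alpha>)"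
    by (rule emeasure_Diff) (use sub assms in \<open>auto simp: emeasure_cball\<close>)
  also have "\<dots> = ennreal (unit_ball_vol DIM('a) * (\<beta>^DIM('a) - \<alpha>^DIM('a)))"
    using assms by (simp add: emeasure_cball emeasure_ball ennreal_minus[symmetric] right_diff_distrib power_mono)
  finally show ?thesis using eq by simp
qed

definition kap :: "real \<Rightarrow> 'a::euclidean_space itself \<Rightarrow> real" where
  "kap p _ = unit_ball_vol DIM('a) / (2 ^ DIM('a) * (5/2) powr (real DIM('a) + p))"

lemma kap_pos: "kap p TYPE('a::euclidean_space) > 0"
  unfolding kap_def by (simp add: DIM_positive)

lemma ball_kern:
  fixes x c :: "'a::euclidean_space"
  assumes D: "D > 0" and dist: "dist x c = 2 * D" and \<delta>: "\<delta> > 0" and p: "p > 0"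
  shows "ennreal (kap p TYPE('a) * \<delta> powr p / D powr p)
     \<le> (\<integral>\<^sup>+ y. indicator (ball c (D/2)) y * ennreal (\<delta> powr p / norm (x - y) powr (real DIM('a) + p)) \<partial>lborel)"
proof -
  let ?N = "real DIM('a)"
  let ?K = "\<delta> powr p / (5 * D / 2) powr (?N + p)"
  have pt: "indicator (ball c (D/2)) y * ennreal ?K
        \<le> indicator (ball c (D/2)) y * ennreal (\<delta> powr p / norm (x - y) powr (?N + p))" for y
  proof (cases "y \<in> ball c (D/2)")
    case True
    have "norm (x - y) \<le> dist x c + dist c y" by (metis dist_norm dist_triangle)
    also have "\<dots> \<le> 5 * D / 2" using True dist by (simp add: dist_commute)
    finally have le: "norm (x - y) \<le> 5 * D / 2" .
    have "dist c y < D / 2" using True by simp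
    have "dist x y \<ge> dist x c - dist c y" using dist_triangle[of x c y] by (simp add: dist_commute)
    then have "dist x y > 0" using dist D \<open>dist c y < D / 2\<close> by linarith
    then have "norm (x - y) > 0" by (simp add: dist_norm)
    then have "norm (x - y) powr (?N + p) \<le> (5 * D / 2) powr (?N + p)"
      using le p by (intro powr_mono2) auto
    then have "?K \<le> \<delta> powr p / norm (x - y) powr (?N + p)"
      using \<open>norm (x - y) > 0\<close> p D by (intro divide_left_mono mult_pos_pos) auto
    then show ?thesis using True by (simp add: ennreal_leI)
  qed simp
  have "(\<integral>\<^sup>+ y. indicator (ball c (D/2)) y * ennreal ?K \<partial>lborel) = ennreal ?K * emeasure lborel (ball c (D/2))"
    by (subst mult.commute) (simp add: nn_integral_cmult_indicator)
  also have "\<dots> = ennreal ?K * ennreal (unit_ball_vol ?N * (D/2) ^ DIM('a))"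
    using D by (simp add: emeasure_ball)
  also have "\<dots> = ennreal (?K * (unit_ball_vol ?N * (D/2) ^ DIM('a)))"
    by (rule ennreal_mult[symmetric]) (use D in auto)
  also have "?K * (unit_ball_vol ?N * (D/2) ^ DIM('a)) = kap p TYPE('a) * \<delta> powr p / D powr p"
  proof -
    have "(5 * D / 2) powr (?N + p) = ((5/2) * D) powr (?N + p)" by simp
    also have "\<dots> = (5/2) powr (?N + p) * D powr (?N + p)" using powr_mult[of "5/2" D "?N + p"] D by simp
    also have "D powr (?N + p) = D ^ DIM('a) * D powr p" using D by (simp add: powr_add powr_realpow)
    finally have "(5 * D / 2) powr (?N + p) = (5/2) powr (?N + p) * (D ^ DIM('a) * D powr p)" .
    then have "?K * (unit_ball_vol ?N * (D/2) ^ DIM('a)) = (\<delta> powr p * unit_ball_vol ?N * D ^ DIM('a)) / (2 ^ DIM('a) * ((5/2) powr (?N + p) * (D ^ DIM('a) * D powr p)))"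
      by (simp add: power_divide)
    also have "\<dots> = unit_ball_vol ?N / (2 ^ DIM('a) * (5/2) powr (?N + p)) * \<delta> powr p / D powr p"
      using D by (simp add: divide_simps)
    finally show ?thesis unfolding kap_def .
  qed
  finally have eq: "(\<integral>\<^sup>+ y. indicator (ball c (D/2)) y * ennreal ?K \<partial>lborel) = ennreal (kap p TYPE('a) * \<delta> powr p / D powr p)" .
  have "(\<integral>\<^sup>+ y. indicator (ball c (D/2)) y * ennreal ?K \<partial>lborel) \<le> (\<integral>\<^sup>+ y. indicator (ball c (D/2)) y * ennreal (\<delta> powr p / norm (x - y) powr (?N + p)) \<partial>lborel)"
    by (rule nn_integral_mono) (rule pt)
  with eq show ?thesis by simp
qed

lemma region_kern:
  fixes x c :: "'a::euclidean_space"
  assumes D: "D > 0" and dist: "dist x c = 2 * D" and \<delta>: "\<delta> > 0" and p: "p > 0"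
    and sub: "ball c (D/2) \<subseteq> T"
  shows "ennreal (kap p TYPE('a) * \<delta> powr p / D powr p)
     \<le> (\<integral>\<^sup>+ y. indicator T y * ennreal (\<delta> powr p / norm (x - y) powr (real DIM('a) + p)) \<partial>lborel)"
proof -
  have "(\<integral>\<^sup>+ y. indicator (ball c (D/2)) y * ennreal (\<delta> powr p / norm (x - y) powr (real DIM('a) + p)) \<partial>lborel)
     \<le> (\<integral>\<^sup>+ y. indicator T y * ennreal (\<delta> powr p / norm (x - y) powr (real DIM('a) + p)) \<partial>lborel)"
    by (rule nn_integral_mono) (use sub in \<open>auto simp: indicator_def\<close>)
  with ball_kern[OF D dist \<delta> p] show ?thesis by (rule order_trans)
qed

lemma outer_ball:
  fixes x :: "'a::euclidean_space"
  assumes x: "x \<noteq> 0" and R: "norm x < R"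
  defines "D \<equiv> R - norm x"
  defines "c \<equiv> (1 + 2 * D / norm x) *\<^sub>R x"
  shows "dist x c = 2 * D" "ball c (D/2) \<subseteq> {y. R < norm y}"
proof -
  have nx: "norm x > 0" using x by simp
  have D: "D > 0" using R unfolding D_def by simp
  have "x - c = (- (2 * D / norm x)) *\<^sub>R x" unfolding c_def by (simp add: algebra_simps)
  then have "dist x c = 2 * D / norm x * norm x" using D nx by (simp add: dist_norm)
  then show dc: "dist x c = 2 * D" using nx by simp
  have "norm c = \<bar>1 + 2 * D / norm x\<bar> * norm x" unfolding c_def by simp
  also have "\<bar>1 + 2 * D / norm x\<bar> = 1 + 2 * D / norm x" using D nx by simp
  finally have nc: "norm c = norm x + 2 * D" using nx by (simp add: distrib_right)
  show "ball c (D/2) \<subseteq> {y. R < norm y}"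
  proof
    fix y assume "y \<in> ball c (D/2)"
    then have "dist c y < D/2" by simp
    moreover have "norm c \<le> norm y + dist c y" using norm_triangle_ineq[of y "c - y"] by (simp add: dist_norm)
    ultimately show "y \<in> {y. R < norm y}" using nc D unfolding D_def by auto
  qed
qed

lemma inner_ball:
  fixes x :: "'a::euclidean_space"
  assumes r: "0 \<le> r" "r < norm x" "norm x \<le> 2 * r"
  defines "D \<equiv> norm x - r"
  defines "c \<equiv> (1 - 2 * D / norm x) *\<^sub>R x"
  shows "dist x c = 2 * D" "ball c (D/2) \<subseteq> {y. norm y < r}"
proof -
  have nx: "norm x > 0" using r by linarith
  have D: "D > 0" using r unfolding D_def by simp
  have "x - c = (2 * D / norm x) *\<^sub>R x" unfolding c_def by (simp add: algebra_simps)
  then have "dist x c = 2 * D / norm x * norm x" using D nx by (simp add: dist_norm)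
  then show dc: "dist x c = 2 * D" using nx by simp
  have "1 - 2 * D / norm x = (2 * r - norm x) / norm x" using nx unfolding D_def by (simp add: field_simps)
  then have "norm c = \<bar>(2 * r - norm x) / norm x\<bar> * norm x" unfolding c_def by simp
  also have "\<bar>(2 * r - norm x) / norm x\<bar> = (2 * r - norm x) / norm x" using nx r by simp
  finally have nc: "norm c = 2 * r - norm x" using nx by simp
  show "ball c (D/2) \<subseteq> {y. norm y < r}"
  proof
    fix y assume "y \<in> ball c (D/2)"
    then have "dist c y < D/2" by simp
    moreover have "norm y \<le> norm c + dist c y" using norm_triangle_ineq[of c "y - c"] by (simp add: dist_norm norm_minus_commute)
    ultimately show "y \<in> {y. norm y < r}" using nc D r unfolding D_def by auto
  qed
qed

abbreviation kz :: "real \<Rightarrow> real \<Rightarrow> 'a::euclidean_space \<times> 'a \<Rightarrow> ennreal" where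
  "kz p \<delta> z \<equiv> ennreal (\<delta> powr p / norm (fst z - snd z) powr (real DIM('a) + p))"

lemma prod_lower:
  fixes S T :: "'a::euclidean_space set"
  assumes [measurable]: "S \<in> sets borel" "T \<in> sets borel"
    and B: "\<And>x. x \<in> S \<Longrightarrow> ennreal B \<le> (\<integral>\<^sup>+ y. indicator T y * ennreal (\<delta> powr p / norm (x - y) powr (real DIM('a) + p)) \<partial>lborel)"
  shows "ennreal B * emeasure lborel S \<le> (\<integral>\<^sup>+ z. indicator (S \<times> T) z * kz p \<delta> z \<partial>(lborel \<Otimes>\<^sub>M lborel))"
proof -
  have meas: "(\<lambda>z. indicator (S \<times> T) z * kz p \<delta> z) \<in> borel_measurable (lborel \<Otimes>\<^sub>M lborel)"
    by measurable
  have "(\<integral>\<^sup>+ z. indicator (S \<times> T) z * kz p \<delta> z \<partial>(lborel \<Otimes>\<^sub>M lborel))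
      = (\<integral>\<^sup>+ x. \<integral>\<^sup>+ y. indicator (S \<times> T) (x, y) * kz p \<delta> (x, y) \<partial>lborel \<partial>lborel)"
    using lborel.nn_integral_fst[OF meas] by simp
  also have "\<dots> = (\<integral>\<^sup>+ x. indicator S x * (\<integral>\<^sup>+ y. indicator T y * ennreal (\<delta> powr p / norm (x - y) powr (real DIM('a) + p)) \<partial>lborel) \<partial>lborel)"
    by (intro nn_integral_cong) (simp add: indicator_times mult.assoc nn_integral_cmult)
  also have "\<dots> \<ge> (\<integral>\<^sup>+ x. indicator S x * ennreal B \<partial>lborel)"
  proof (intro nn_integral_mono)
    fix x show "indicator S x * ennreal B \<le> indicator S x * (\<integral>\<^sup>+ y. indicator T y * ennreal (\<delta> powr p / norm (x - y) powr (real DIM('a) + p)) \<partial>lborel)"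
      by (cases "x \<in> S") (simp_all add: B)
  qed
  finally show ?thesis by (simp add: nn_integral_cmult_indicator mult.commute)
qed

lemma I_lower:
  fixes u :: "'a::euclidean_space \<Rightarrow> real"
  assumes "\<And>x y. (x, y) \<in> P \<Longrightarrow> \<delta> < \<bar>u y - u x\<bar>"
  shows "(\<integral>\<^sup>+ z. indicator P z * kz p \<delta> z \<partial>(lborel \<Otimes>\<^sub>M lborel)) \<le> I_delta p \<delta> u"
  unfolding I_delta_def
  by (intro nn_integral_mono) (auto simp: indicator_def assms)





lemma power_diff_lower:
  fixes a b c :: real assumes "0 \<le> a" "a \<le> c" "c \<le> b" "1 \<le> n"
  shows "a ^ (n - 1) * (b - c) \<le> b ^ n - c ^ n"
proof -
  have bn: "b ^ n = b * b ^ (n - 1)" "c ^ n = c * c ^ (n - 1)" using assms(4)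
    by (metis Suc_diff_1 less_le_trans zero_less_one power_Suc)+
  have "c ^ (n - 1) \<le> b ^ (n - 1)" using assms by (intro power_mono) auto
  then have "b * c ^ (n - 1) \<le> b * b ^ (n - 1)" using assms by (intro mult_left_mono) auto
  moreover have "a ^ (n - 1) \<le> c ^ (n - 1)" using assms by (intro power_mono) auto
  ultimately have "(b - c) * a ^ (n - 1) \<le> (b - c) * c ^ (n - 1)" using assms by (intro mult_left_mono) auto
  also have "\<dots> = b * c ^ (n - 1) - c * c ^ (n - 1)" by (simp add: algebra_simps)
  also have "\<dots> \<le> b ^ n - c ^ n" using bn \<open>b * c ^ (n - 1) \<le> b * b ^ (n - 1)\<close> by linarith
  finally show ?thesis by (simp add: mult.commute)
qed

lemma aux_comb: "(k::real) / t * (w * (b - c)) + k / t * (w * (d - b)) = k * w / t * (d - c)"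
proof -
  have "k / t * (w * (b - c)) + k / t * (w * (d - b)) = k / t * (w * ((b - c) + (d - b)))"
    by (simp only: distrib_left)
  then show ?thesis by simp
qed

lemma chain_bound:
  fixes u :: "'a::euclidean_space \<Rightarrow> real" and e :: 'a and \<rho> :: "nat \<Rightarrow> real"
  assumes e: "norm e = 1"
    and nonincr: "\<And>x y. norm x \<le> norm y \<Longrightarrow> u y \<le> u x"
    and a: "a > 0" and p: "p > 1" and \<delta>: "\<delta> > 0" and m: "2 \<le> m"
    and rmono: "\<And>j. j < m \<Longrightarrow> \<rho> j < \<rho> (Suc j)"
    and r0: "a \<le> \<rho> 0" and rm: "\<rho> m \<le> 2 * a"
    and drop: "\<And>j. j < m \<Longrightarrow> u (\<rho> (Suc j) *\<^sub>R e) + \<delta> < u (\<rho> j *\<^sub>R e)"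
    and I: "I_delta p \<delta> u \<le> ennreal C" and C: "C \<ge> 0"
  shows "(\<Sum>i\<in>{1..m-1}. (\<rho> (Suc i) - \<rho> (i - 1)) powr (1 - p))
           * (kap p TYPE('a) * \<delta> powr p * unit_ball_vol DIM('a) * a ^ (DIM('a) - 1)) \<le> C"
proof -
  let ?N = "real DIM('a)"
  let ?k = "kap p TYPE('a) * \<delta> powr p"
  let ?w = "unit_ball_vol ?N"
  have rle: "\<rho> i \<le> \<rho> j" if "i \<le> j" "j \<le> m" for i j
    using that
  proof (induction j)
    case 0 then show ?case by simp
  next
    case (Suc j)
    show ?case
    proof (cases "i = Suc j")
      case False
      then have "\<rho> i \<le> \<rho> j" using Suc by simp
      also have "\<rho> j < \<rho> (Suc j)" using Suc rmono by simp
      finally show ?thesis by simp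
    qed simp
  qed
  have rlt: "\<rho> i < \<rho> j" if "i < j" "j \<le> m" for i j
  proof -
    have "\<rho> i < \<rho> (Suc i)" using that rmono by simp
    also have "\<rho> (Suc i) \<le> \<rho> j" using that by (intro rle) auto
    finally show ?thesis .
  qed
  have rpos: "\<rho> j \<ge> a" if "j \<le> m" for j using rle[of 0 j] that r0 by simp
  have nre: "norm (\<rho> j *\<^sub>R e) = \<rho> j" if "j \<le> m" for j using rpos[OF that] a e by simp
  define S where "S j = {x::'a. \<rho> (j - 1) < norm x \<and> norm x < \<rho> j}" for j
  define Ou where "Ou i = {y::'a. \<rho> (Suc i) < norm y}" for i
  define In where "In i = {y::'a. norm y < \<rho> (i - 1)}" for i
  define A where "A i = S i \<times> Ou i" for i
  define B where "B i = S (Suc i) \<times> In i" for i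
  define idx where "idx = {1..m-1}"
  define P1 where "P1 = \<Union>(A ` idx)"
  define P2 where "P2 = \<Union>(B ` idx)"
  have [measurable]: "S i \<in> sets borel" "Ou i \<in> sets borel" "In i \<in> sets borel" for i
    unfolding S_def Ou_def In_def by measurable
  have Ameas[measurable]: "A i \<in> sets (lborel \<Otimes>\<^sub>M lborel)" "B i \<in> sets (lborel \<Otimes>\<^sub>M lborel)" for i
    unfolding A_def B_def by (auto intro!: pair_measureI)
  have fin: "finite idx" unfolding idx_def by simp
  have condA: "\<delta> < \<bar>u y - u x\<bar>" if "(x, y) \<in> A i" "i \<in> idx" for x y i
  proof -
    have i: "i < m" "1 \<le> i" using that m unfolding idx_def by auto
    have "norm x \<le> norm (\<rho> i *\<^sub>R e)" using that i nre[of i] unfolding A_def S_def by auto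
    then have "u (\<rho> i *\<^sub>R e) \<le> u x" by (rule nonincr)
    moreover have "norm (\<rho> (Suc i) *\<^sub>R e) \<le> norm y" using that i nre[of "Suc i"] unfolding A_def Ou_def by auto
    then have "u y \<le> u (\<rho> (Suc i) *\<^sub>R e)" by (rule nonincr)
    ultimately show ?thesis using drop[OF i(1)] by linarith
  qed
  have condB: "\<delta> < \<bar>u y - u x\<bar>" if "(x, y) \<in> B i" "i \<in> idx" for x y i
  proof -
    have i: "i < m" "1 \<le> i" using that m unfolding idx_def by auto
    have "norm (\<rho> i *\<^sub>R e) \<le> norm x" using that i nre[of i] unfolding B_def S_def by auto
    then have "u x \<le> u (\<rho> i *\<^sub>R e)" by (rule nonincr)
    moreover have "norm y \<le> norm (\<rho> (i - 1) *\<^sub>R e)" using that i nre[of "i - 1"] unfolding B_def In_def by auto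
    then have "u (\<rho> (i - 1) *\<^sub>R e) \<le> u y" by (rule nonincr)
    moreover have "u (\<rho> (Suc (i - 1)) *\<^sub>R e) + \<delta> < u (\<rho> (i - 1) *\<^sub>R e)" using i by (intro drop) auto
    ultimately show ?thesis using i by simp
  qed
  have "(\<integral>\<^sup>+ z. indicator (P1 \<union> P2) z * kz p \<delta> z \<partial>(lborel \<Otimes>\<^sub>M lborel)) \<le> I_delta p \<delta> u"
    by (rule I_lower) (auto simp: P1_def P2_def intro: condA condB)
  also have "\<dots> \<le> ennreal C" by (rule I)
  finally have main: "(\<integral>\<^sup>+ z. indicator (P1 \<union> P2) z * kz p \<delta> z \<partial>(lborel \<Otimes>\<^sub>M lborel)) \<le> ennreal C" .
  have Sdisj: "S i \<inter> S j = {}" if "1 \<le> i" "i < j" "j \<le> m" for i j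
  proof -
    have "\<rho> i \<le> \<rho> (j - 1)" using that by (intro rle) auto
    then show ?thesis unfolding S_def by auto
  qed
  have disjA: "disjoint_family_on A idx"
    unfolding disjoint_family_on_def
  proof (intro ballI impI)
    fix i j assume ij: "i \<in> idx" "j \<in> idx" "i \<noteq> j"
    show "A i \<inter> A j = {}"
    proof (cases "i < j")
      case True then have "S i \<inter> S j = {}" using ij by (intro Sdisj) (auto simp: idx_def)
      then show ?thesis unfolding A_def by auto
    next
      case False then have "S j \<inter> S i = {}" using ij by (intro Sdisj) (auto simp: idx_def)
      then show ?thesis unfolding A_def by auto
    qed
  qed
  have disjB: "disjoint_family_on B idx"
    unfolding disjoint_family_on_def
  proof (intro ballI impI)
    fix i j assume ij: "i \<in> idx" "j \<in> idx" "i \<noteq> j"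
    show "B i \<inter> B j = {}"
    proof (cases "i < j")
      case True then have "S (Suc i) \<inter> S (Suc j) = {}" using ij by (intro Sdisj) (auto simp: idx_def)
      then show ?thesis unfolding B_def by auto
    next
      case False then have "S (Suc j) \<inter> S (Suc i) = {}" using ij by (intro Sdisj) (auto simp: idx_def)
      then show ?thesis unfolding B_def by auto
    qed
  qed
  have P12: "P1 \<inter> P2 = {}"
  proof -
    have "norm x < norm y" if "(x, y) \<in> P1" for x y
    proof -
      from that obtain i where i: "i \<in> idx" "(x, y) \<in> A i" unfolding P1_def by auto
      have "\<rho> i \<le> \<rho> (Suc i)" using i m by (intro rle) (auto simp: idx_def)
      then show ?thesis using i unfolding A_def S_def Ou_def by auto
    qed
    moreover have "norm y < norm x" if "(x, y) \<in> P2" for x y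
    proof -
      from that obtain i where i: "i \<in> idx" "(x, y) \<in> B i" unfolding P2_def by auto
      have "\<rho> (i - 1) \<le> \<rho> i" using i m by (intro rle) (auto simp: idx_def)
      then show ?thesis using i unfolding B_def S_def In_def by auto
    qed
    ultimately show ?thesis by fastforce
  qed
  have ind: "indicator (P1 \<union> P2) z = ((\<Sum>i\<in>idx. indicator (A i) z) + (\<Sum>i\<in>idx. indicator (B i) z) :: ennreal)" for z :: "'a \<times> 'a"
  proof -
    have "indicator (P1 \<union> P2) z = (indicator P1 z + indicator P2 z :: ennreal)"
      using P12 by (auto simp: indicator_def)
    also have "indicator P1 z = (\<Sum>i\<in>idx. indicator (A i) z :: ennreal)"
      unfolding P1_def by (rule indicator_UN_disjoint[OF fin disjA])
    also have "indicator P2 z = (\<Sum>i\<in>idx. indicator (B i) z :: ennreal)"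
      unfolding P2_def by (rule indicator_UN_disjoint[OF fin disjB])
    finally show ?thesis .
  qed
  have "(\<integral>\<^sup>+ z. indicator (P1 \<union> P2) z * kz p \<delta> z \<partial>(lborel \<Otimes>\<^sub>M lborel))
     = (\<integral>\<^sup>+ z. (\<Sum>i\<in>idx. indicator (A i) z * kz p \<delta> z) + (\<Sum>i\<in>idx. indicator (B i) z * kz p \<delta> z) \<partial>(lborel \<Otimes>\<^sub>M lborel))"
    by (intro nn_integral_cong) (simp add: ind distrib_right sum_distrib_right)
  also have "\<dots> = (\<Sum>i\<in>idx. \<integral>\<^sup>+ z. indicator (A i) z * kz p \<delta> z \<partial>(lborel \<Otimes>\<^sub>M lborel))
              + (\<Sum>i\<in>idx. \<integral>\<^sup>+ z. indicator (B i) z * kz p \<delta> z \<partial>(lborel \<Otimes>\<^sub>M lborel))"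
    by (simp add: nn_integral_add nn_integral_sum)
  finally have split: "(\<integral>\<^sup>+ z. indicator (P1 \<union> P2) z * kz p \<delta> z \<partial>(lborel \<Otimes>\<^sub>M lborel))
     = (\<Sum>i\<in>idx. \<integral>\<^sup>+ z. indicator (A i) z * kz p \<delta> z \<partial>(lborel \<Otimes>\<^sub>M lborel))
              + (\<Sum>i\<in>idx. \<integral>\<^sup>+ z. indicator (B i) z * kz p \<delta> z \<partial>(lborel \<Otimes>\<^sub>M lborel))" .
  define s where "s i = \<rho> (Suc i) - \<rho> (i - 1)" for i
  have spos: "s i > 0" if "i \<in> idx" for i
    using that rlt[of "i - 1" "Suc i"] unfolding s_def idx_def by auto
  have boundA: "ennreal (?k / s i powr p * (?w * (\<rho> i ^ DIM('a) - \<rho> (i - 1) ^ DIM('a))))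
      \<le> (\<integral>\<^sup>+ z. indicator (A i) z * kz p \<delta> z \<partial>(lborel \<Otimes>\<^sub>M lborel))" if i: "i \<in> idx" for i
  proof -
    have i': "1 \<le> i" "i < m" using i m unfolding idx_def by auto
    have lo: "ennreal (?k / s i powr p) \<le> (\<integral>\<^sup>+ y. indicator (Ou i) y * ennreal (\<delta> powr p / norm (x - y) powr (?N + p)) \<partial>lborel)"
      if x: "x \<in> S i" for x
    proof -
      have x1: "\<rho> (i - 1) < norm x" "norm x < \<rho> i" using x unfolding S_def by auto
      have "\<rho> (i - 1) \<ge> a" using i' by (intro rpos) auto
      then have x0: "x \<noteq> 0" using x1 a by auto
      have xr: "norm x < \<rho> (Suc i)" using x1 rmono[of i] i' by simp
      define D where "D = \<rho> (Suc i) - norm x"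
      have D: "D > 0" "D \<le> s i" using xr x1 unfolding D_def s_def by auto
      have "ennreal (?k / s i powr p) \<le> ennreal (?k / D powr p)"
        using D kap_pos[of p, where 'a='a] \<delta> p
        by (intro ennreal_leI divide_left_mono powr_mono2 mult_pos_pos) auto
      also have "\<dots> \<le> (\<integral>\<^sup>+ y. indicator (Ou i) y * ennreal (\<delta> powr p / norm (x - y) powr (?N + p)) \<partial>lborel)"
      proof -
        define c where "c = (1 + 2 * D / norm x) *\<^sub>R x"
        have dc: "dist x c = 2 * D" using outer_ball(1)[OF x0 xr] unfolding c_def D_def by simp
        have bc: "ball c (D/2) \<subseteq> Ou i" using outer_ball(2)[OF x0 xr] unfolding c_def D_def Ou_def by simp
        show ?thesis using region_kern[OF D(1) dc \<delta> _ bc] p by simp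
      qed
      finally show ?thesis .
    qed
    have F1: "ennreal (?k / s i powr p) * emeasure lborel (S i)
        \<le> (\<integral>\<^sup>+ z. indicator (S i \<times> Ou i) z * kz p \<delta> z \<partial>(lborel \<Otimes>\<^sub>M lborel))"
      by (rule prod_lower) (auto intro: lo)
    have F2: "emeasure lborel (S i) = ennreal (?w * (\<rho> i ^ DIM('a) - \<rho> (i - 1) ^ DIM('a)))"
    proof -
      have "a \<le> \<rho> (i - 1)" "\<rho> (i - 1) \<le> \<rho> i" using i' by (auto intro!: rpos rle)
      then show ?thesis unfolding S_def using a by (intro emeasure_shell) auto
    qed
    have F3: "ennreal (?k / s i powr p * (?w * (\<rho> i ^ DIM('a) - \<rho> (i - 1) ^ DIM('a)))) = ennreal (?k / s i powr p) * ennreal (?w * (\<rho> i ^ DIM('a) - \<rho> (i - 1) ^ DIM('a)))"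
      by (rule ennreal_mult') (use spos[OF i] kap_pos[of p, where 'a='a] \<delta> in simp)
    show ?thesis unfolding A_def F3 F2[symmetric] by (rule F1)
  qed
  have boundB: "ennreal (?k / s i powr p * (?w * (\<rho> (Suc i) ^ DIM('a) - \<rho> i ^ DIM('a))))
      \<le> (\<integral>\<^sup>+ z. indicator (B i) z * kz p \<delta> z \<partial>(lborel \<Otimes>\<^sub>M lborel))" if i: "i \<in> idx" for i
  proof -
    have i': "1 \<le> i" "i < m" using i m unfolding idx_def by auto
    have lo: "ennreal (?k / s i powr p) \<le> (\<integral>\<^sup>+ y. indicator (In i) y * ennreal (\<delta> powr p / norm (x - y) powr (?N + p)) \<partial>lborel)"
      if x: "x \<in> S (Suc i)" for x
    proof -
      have x1: "\<rho> i < norm x" "norm x < \<rho> (Suc i)" using x unfolding S_def by auto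
      have ra: "\<rho> (i - 1) \<ge> a" using i' by (intro rpos) auto
      have "\<rho> (i - 1) \<le> \<rho> i" using i' by (intro rle) auto
      then have r1: "\<rho> (i - 1) < norm x" using x1 by simp
      have "\<rho> (Suc i) \<le> \<rho> m" using i' by (intro rle) auto
      then have r2: "norm x \<le> 2 * \<rho> (i - 1)" using x1 rm ra by simp
      have r0': "0 \<le> \<rho> (i - 1)" using ra a by simp
      define D where "D = norm x - \<rho> (i - 1)"
      have D: "D > 0" "D \<le> s i" using r1 x1 unfolding D_def s_def by auto
      have "ennreal (?k / s i powr p) \<le> ennreal (?k / D powr p)"
        using D kap_pos[of p, where 'a='a] \<delta> p
        by (intro ennreal_leI divide_left_mono powr_mono2 mult_pos_pos) auto
      also have "\<dots> \<le> (\<integral>\<^sup>+ y. indicator (In i) y * ennreal (\<delta> powr p / norm (x - y) powr (?N + p)) \<partial>lborel)"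
      proof -
        define c where "c = (1 - 2 * D / norm x) *\<^sub>R x"
        have dc: "dist x c = 2 * D" using inner_ball(1)[OF r0' r1 r2] unfolding c_def D_def by simp
        have bc: "ball c (D/2) \<subseteq> In i" using inner_ball(2)[OF r0' r1 r2] unfolding c_def D_def In_def by simp
        show ?thesis using region_kern[OF D(1) dc \<delta> _ bc] p by simp
      qed
      finally show ?thesis .
    qed
    have F1: "ennreal (?k / s i powr p) * emeasure lborel (S (Suc i))
        \<le> (\<integral>\<^sup>+ z. indicator (S (Suc i) \<times> In i) z * kz p \<delta> z \<partial>(lborel \<Otimes>\<^sub>M lborel))"
      by (rule prod_lower) (auto intro: lo)
    have F2: "emeasure lborel (S (Suc i)) = ennreal (?w * (\<rho> (Suc i) ^ DIM('a) - \<rho> i ^ DIM('a)))"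
    proof -
      have "a \<le> \<rho> i" "\<rho> i \<le> \<rho> (Suc i)" using i' by (auto intro!: rpos rle)
      then show ?thesis unfolding S_def using a by (simp add: emeasure_shell)
    qed
    have F3: "ennreal (?k / s i powr p * (?w * (\<rho> (Suc i) ^ DIM('a) - \<rho> i ^ DIM('a)))) = ennreal (?k / s i powr p) * ennreal (?w * (\<rho> (Suc i) ^ DIM('a) - \<rho> i ^ DIM('a)))"
      by (rule ennreal_mult') (use spos[OF i] kap_pos[of p, where 'a='a] \<delta> in simp)
    show ?thesis unfolding B_def F3 F2[symmetric] by (rule F1)
  qed
  have trm: "s i powr (1 - p) * (?k * ?w * a ^ (DIM('a) - 1))
     \<le> ?k / s i powr p * (?w * (\<rho> i ^ DIM('a) - \<rho> (i - 1) ^ DIM('a)))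
       + ?k / s i powr p * (?w * (\<rho> (Suc i) ^ DIM('a) - \<rho> i ^ DIM('a)))" if i: "i \<in> idx" for i
  proof -
    have i': "1 \<le> i" "i < m" using i m unfolding idx_def by auto
    have ra: "a \<le> \<rho> (i - 1)" using i' by (intro rpos) auto
    have "\<rho> (i - 1) \<le> \<rho> (Suc i)" using i' by (intro rle) auto
    then have pd: "a ^ (DIM('a) - 1) * s i \<le> \<rho> (Suc i) ^ DIM('a) - \<rho> (i - 1) ^ DIM('a)"
      unfolding s_def using ra a by (intro power_diff_lower) (auto simp: DIM_positive Suc_leI)
    have sp: "s i > 0" using spos[OF i] .
    have "s i powr (1 - p) = s i / s i powr p" using sp by (simp add: powr_diff)
    then have "s i powr (1 - p) * (?k * ?w * a ^ (DIM('a) - 1)) = ?k * ?w / s i powr p * (a ^ (DIM('a) - 1) * s i)"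
      by simp
    also have "\<dots> \<le> ?k * ?w / s i powr p * (\<rho> (Suc i) ^ DIM('a) - \<rho> (i - 1) ^ DIM('a))"
      using pd kap_pos[of p, where 'a='a] \<delta> sp by (intro mult_left_mono) auto
    also have "\<dots> = ?k / s i powr p * (?w * (\<rho> i ^ DIM('a) - \<rho> (i - 1) ^ DIM('a)))
       + ?k / s i powr p * (?w * (\<rho> (Suc i) ^ DIM('a) - \<rho> i ^ DIM('a)))"
      by (rule aux_comb[symmetric])
    finally show ?thesis .
  qed
  have nnA: "0 \<le> ?k / s i powr p * (?w * (\<rho> i ^ DIM('a) - \<rho> (i - 1) ^ DIM('a)))" if i: "i \<in> idx" for i
  proof -
    have i': "1 \<le> i" "i < m" using i m unfolding idx_def by auto
    have "\<rho> (i - 1) \<le> \<rho> i" using i' by (intro rle) auto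
    moreover have "a \<le> \<rho> (i - 1)" using i' by (intro rpos) auto
    ultimately have "\<rho> (i - 1) ^ DIM('a) \<le> \<rho> i ^ DIM('a)" using a by (intro power_mono) auto
    then show ?thesis using kap_pos[of p, where 'a='a] \<delta> by simp
  qed
  have nnB: "0 \<le> ?k / s i powr p * (?w * (\<rho> (Suc i) ^ DIM('a) - \<rho> i ^ DIM('a)))" if i: "i \<in> idx" for i
  proof -
    have i': "1 \<le> i" "i < m" using i m unfolding idx_def by auto
    have "\<rho> i \<le> \<rho> (Suc i)" using i' by (intro rle) auto
    moreover have "a \<le> \<rho> i" using i' by (intro rpos) auto
    ultimately have "\<rho> i ^ DIM('a) \<le> \<rho> (Suc i) ^ DIM('a)" using a by (intro power_mono) auto
    then show ?thesis using kap_pos[of p, where 'a='a] \<delta> by simp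
  qed
  have "ennreal ((\<Sum>i\<in>idx. s i powr (1 - p)) * (?k * ?w * a ^ (DIM('a) - 1)))
     \<le> ennreal ((\<Sum>i\<in>idx. ?k / s i powr p * (?w * (\<rho> i ^ DIM('a) - \<rho> (i - 1) ^ DIM('a))))
       + (\<Sum>i\<in>idx. ?k / s i powr p * (?w * (\<rho> (Suc i) ^ DIM('a) - \<rho> i ^ DIM('a)))))"
    unfolding sum_distrib_right sum.distrib[symmetric] by (intro ennreal_leI sum_mono trm)
  also have "\<dots> = (\<Sum>i\<in>idx. ennreal (?k / s i powr p * (?w * (\<rho> i ^ DIM('a) - \<rho> (i - 1) ^ DIM('a)))))
       + (\<Sum>i\<in>idx. ennreal (?k / s i powr p * (?w * (\<rho> (Suc i) ^ DIM('a) - \<rho> i ^ DIM('a)))))"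
    using nnA nnB by (simp add: ennreal_plus sum_nonneg sum_ennreal)
  also have "\<dots> \<le> (\<Sum>i\<in>idx. \<integral>\<^sup>+ z. indicator (A i) z * kz p \<delta> z \<partial>(lborel \<Otimes>\<^sub>M lborel))
              + (\<Sum>i\<in>idx. \<integral>\<^sup>+ z. indicator (B i) z * kz p \<delta> z \<partial>(lborel \<Otimes>\<^sub>M lborel))"
    by (intro add_mono sum_mono boundA boundB)
  also have "\<dots> \<le> ennreal C" using main split by simp
  finally have "(\<Sum>i\<in>idx. s i powr (1 - p)) * (?k * ?w * a ^ (DIM('a) - 1)) \<le> C"
    using C by (simp add: ennreal_le_iff)
  then show ?thesis unfolding idx_def s_def by (simp add: mult.assoc)
qed

lemma pigeon:
  fixes s :: "nat \<Rightarrow> real" and I :: "nat set"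
  assumes fin: "finite I" and n: "card I = n" "n \<ge> 1" and spos: "\<And>i. i \<in> I \<Longrightarrow> s i > 0"
    and L: "sum s I \<le> L" and p: "p > 1"
  shows "real n powr p * (2 * L) powr (1 - p) / 2 \<le> (\<Sum>i\<in>I. s i powr (1 - p))"
proof -
  have Lpos: "L > 0"
  proof -
    obtain i where "i \<in> I" using n by (metis card.empty not_one_le_zero ex_in_conv)
    then have "s i \<le> sum s I" using fin spos by (intro member_le_sum) (auto intro: less_imp_le)
    with spos[OF \<open>i \<in> I\<close>] L show ?thesis by linarith
  qed
  define \<theta> where "\<theta> = 2 * L / n"
  have \<theta>: "\<theta> > 0" unfolding \<theta>_def using Lpos n by simp
  define G where "G = {i\<in>I. s i \<le> \<theta>}"
  define Bd where "Bd = {i\<in>I. \<not> s i \<le> \<theta>}"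
  have finG: "finite G" "finite Bd" using fin unfolding G_def Bd_def by auto
  have cardsum: "card G + card Bd = n"
  proof -
    have "G \<union> Bd = I" "G \<inter> Bd = {}" unfolding G_def Bd_def by auto
    then show ?thesis using card_Un_disjoint[OF finG] n by simp
  qed
  have "\<theta> * card Bd = (\<Sum>i\<in>Bd. \<theta>)" by simp
  also have "\<dots> \<le> (\<Sum>i\<in>Bd. s i)" by (intro sum_mono) (auto simp: Bd_def)
  also have "\<dots> \<le> sum s I" using fin spos by (intro sum_mono2) (auto simp: Bd_def intro: less_imp_le)
  also have "\<dots> \<le> L" by (rule L)
  finally have "\<theta> * card Bd \<le> L" .
  then have "card Bd \<le> n / 2" unfolding \<theta>_def using n Lpos by (simp add: field_simps)
  then have cG: "real (card G) \<ge> n / 2" using cardsum by linarith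
  have "(\<Sum>i\<in>G. \<theta> powr (1 - p)) \<le> (\<Sum>i\<in>G. s i powr (1 - p))"
    using p spos by (intro sum_mono powr_mono2') (auto simp: G_def)
  also have "\<dots> \<le> (\<Sum>i\<in>I. s i powr (1 - p))" using fin by (intro sum_mono2) (auto simp: G_def)
  finally have "card G * \<theta> powr (1 - p) \<le> (\<Sum>i\<in>I. s i powr (1 - p))" by simp
  moreover have "n / 2 * \<theta> powr (1 - p) \<le> card G * \<theta> powr (1 - p)"
    using cG by (intro mult_right_mono) auto
  moreover have "n / 2 * \<theta> powr (1 - p) = real n powr p * (2 * L) powr (1 - p) / 2"
  proof -
    have te: "\<theta> powr (1 - p) = (2 * L) powr (1 - p) / real n powr (1 - p)"
      unfolding \<theta>_def using Lpos n by (simp add: powr_divide)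
    have ne: "real n / real n powr (1 - p) = real n powr p"
      using n by (simp add: powr_diff)
    have "n / 2 * \<theta> powr (1 - p) = (real n / real n powr (1 - p)) * (2 * L) powr (1 - p) / 2"
      unfolding te by simp
    also have "\<dots> = real n powr p * (2 * L) powr (1 - p) / 2" by (simp only: ne)
    finally show ?thesis .
  qed
  ultimately show ?thesis by linarith
qed

lemma single_drop:
  fixes u :: "'a::euclidean_space \<Rightarrow> real" and e :: 'a
  assumes e: "norm e = 1"
    and nonincr: "\<And>x y. norm x \<le> norm y \<Longrightarrow> u y \<le> u x"
    and a: "a > 0" and p: "p > 1" and \<delta>: "\<delta> > 0"
    and t: "a \<le> t" and w: "0 < w" "w \<le> a / 2"
    and drop: "u ((t + w) *\<^sub>R e) + \<delta> < u (t *\<^sub>R e)"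
    and I: "I_delta p \<delta> u \<le> ennreal C" and C: "C \<ge> 0"
  shows "kap p TYPE('a) * \<delta> powr p / (2 * w) powr p * (unit_ball_vol DIM('a) * (a / 2) ^ (DIM('a) - 1) * w) \<le> C"
proof -
  let ?N = "real DIM('a)"
  let ?k = "kap p TYPE('a) * \<delta> powr p"
  define S where "S = {x::'a. t - w < norm x \<and> norm x < t}"
  define T where "T = {y::'a. t + w < norm y}"
  have [measurable]: "S \<in> sets borel" "T \<in> sets borel" unfolding S_def T_def by measurable
  have nte: "norm (t *\<^sub>R e) = t" "norm ((t + w) *\<^sub>R e) = t + w" using e a t w by auto
  have cond: "\<delta> < \<bar>u y - u x\<bar>" if "(x, y) \<in> S \<times> T" for x y
  proof -
    have "u (t *\<^sub>R e) \<le> u x" using that nte by (intro nonincr) (auto simp: S_def)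
    moreover have "u y \<le> u ((t + w) *\<^sub>R e)" using that nte by (intro nonincr) (auto simp: T_def)
    ultimately show ?thesis using drop by linarith
  qed
  have lo: "ennreal (?k / (2 * w) powr p) \<le> (\<integral>\<^sup>+ y. indicator T y * ennreal (\<delta> powr p / norm (x - y) powr (?N + p)) \<partial>lborel)"
    if x: "x \<in> S" for x
  proof -
    have x1: "t - w < norm x" "norm x < t" using x unfolding S_def by auto
    then have x0: "x \<noteq> 0" using w t a by auto
    have xr: "norm x < t + w" using x1 w by simp
    define D where "D = t + w - norm x"
    have D: "D > 0" "D \<le> 2 * w" using xr x1 unfolding D_def by auto
    have "ennreal (?k / (2 * w) powr p) \<le> ennreal (?k / D powr p)"
      using D kap_pos[of p, where 'a='a] \<delta> p
      by (intro ennreal_leI divide_left_mono powr_mono2 mult_pos_pos) auto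
    also have "\<dots> \<le> (\<integral>\<^sup>+ y. indicator T y * ennreal (\<delta> powr p / norm (x - y) powr (?N + p)) \<partial>lborel)"
    proof -
      define c where "c = (1 + 2 * D / norm x) *\<^sub>R x"
      have dc: "dist x c = 2 * D" using outer_ball(1)[OF x0 xr] unfolding c_def D_def by simp
      have bc: "ball c (D/2) \<subseteq> T" using outer_ball(2)[OF x0 xr] unfolding c_def D_def T_def by simp
      show ?thesis using region_kern[OF D(1) dc \<delta> _ bc] p by simp
    qed
    finally show ?thesis .
  qed
  have F1: "ennreal (?k / (2 * w) powr p) * emeasure lborel S
        \<le> (\<integral>\<^sup>+ z. indicator (S \<times> T) z * kz p \<delta> z \<partial>(lborel \<Otimes>\<^sub>M lborel))"
    by (rule prod_lower) (auto intro: lo)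
  also have "\<dots> \<le> I_delta p \<delta> u" by (rule I_lower) (rule cond)
  also have "\<dots> \<le> ennreal C" by (rule I)
  finally have F: "ennreal (?k / (2 * w) powr p) * emeasure lborel S \<le> ennreal C" .
  have F2: "emeasure lborel S = ennreal (unit_ball_vol ?N * (t ^ DIM('a) - (t - w) ^ DIM('a)))"
    unfolding S_def using w t a by (intro emeasure_shell) auto
  have pd: "(a / 2) ^ (DIM('a) - 1) * (t - (t - w)) \<le> t ^ DIM('a) - (t - w) ^ DIM('a)"
    using w t a by (intro power_diff_lower) (auto simp: DIM_positive Suc_leI)
  have nn: "0 \<le> ?k / (2 * w) powr p" using kap_pos[of p, where 'a='a] \<delta> by simp
  have "ennreal (?k / (2 * w) powr p * (unit_ball_vol ?N * (t ^ DIM('a) - (t - w) ^ DIM('a)))) \<le> ennreal C"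
    using F unfolding F2 ennreal_mult'[OF nn, symmetric] .
  then have "?k / (2 * w) powr p * (unit_ball_vol ?N * (t ^ DIM('a) - (t - w) ^ DIM('a))) \<le> C"
    using C by (simp add: ennreal_le_iff)
  moreover have "?k / (2 * w) powr p * (unit_ball_vol ?N * (a / 2) ^ (DIM('a) - 1) * w)
      \<le> ?k / (2 * w) powr p * (unit_ball_vol ?N * (t ^ DIM('a) - (t - w) ^ DIM('a)))"
    using pd nn by (intro mult_left_mono) (auto simp: mult.assoc)
  ultimately show ?thesis by linarith
qed

lemma gap_exists:
  fixes u :: "'a::euclidean_space \<Rightarrow> real" and e :: 'a
  assumes e: "norm e = 1"
    and nonincr: "\<And>x y. norm x \<le> norm y \<Longrightarrow> u y \<le> u x"
    and a: "a > 0" and p: "p > 1" and \<delta>: "\<delta> > 0"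
    and I: "I_delta p \<delta> u \<le> ennreal C" and C: "C \<ge> 0"
  shows "\<exists>g>0. \<forall>t w. a \<le> t \<longrightarrow> 0 < w \<longrightarrow> w \<le> a / 2 \<longrightarrow> w < g \<longrightarrow> u (t *\<^sub>R e) \<le> u ((t + w) *\<^sub>R e) + \<delta>"
proof -
  define K1 where "K1 = kap p TYPE('a) * \<delta> powr p * unit_ball_vol DIM('a) * (a / 2) ^ (DIM('a) - 1) / 2 powr p"
  have K1: "K1 > 0" unfolding K1_def using kap_pos[of p, where 'a='a] \<delta> a by simp
  define g where "g = (K1 / (C + 1)) powr (1 / (p - 1))"
  have g: "g > 0" unfolding g_def using K1 C by simp
  have gp: "g powr (p - 1) = K1 / (C + 1)" unfolding g_def using K1 C p by (simp add: powr_powr)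
  show ?thesis
  proof (intro exI[of _ g] conjI allI impI g)
    fix t w assume t: "a \<le> t" and w: "0 < w" "w \<le> a / 2" "w < g"
    show "u (t *\<^sub>R e) \<le> u ((t + w) *\<^sub>R e) + \<delta>"
    proof (rule ccontr)
      assume "\<not> ?thesis"
      then have drop: "u ((t + w) *\<^sub>R e) + \<delta> < u (t *\<^sub>R e)" by simp
      have le: "kap p TYPE('a) * \<delta> powr p / (2 * w) powr p * (unit_ball_vol DIM('a) * (a / 2) ^ (DIM('a) - 1) * w) \<le> C"
        by (rule single_drop[OF e nonincr a p \<delta> t w(1,2) drop I C])
      have wp: "w * w powr (p - 1) = w powr p" using w by (simp add: powr_mult_base)
      have "(2 * w) powr p = 2 powr p * (w * w powr (p - 1))" using w by (simp add: powr_mult wp)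
      then have eq: "kap p TYPE('a) * \<delta> powr p / (2 * w) powr p * (unit_ball_vol DIM('a) * (a / 2) ^ (DIM('a) - 1) * w)
          = K1 / w powr (p - 1)"
        unfolding K1_def using w by simp
      have "w powr (p - 1) < g powr (p - 1)" using w p by (intro powr_less_mono2) auto
      then have "w powr (p - 1) < K1 / (C + 1)" using gp by simp
      then have "C + 1 < K1 / w powr (p - 1)" using K1 C w by (simp add: field_simps)
      then show False using le eq by simp
    qed
  qed
qed

lemma tele1: fixes k :: nat shows "(\<Sum>i\<in>{1..k}. f i - f (i - 1)) = f k - (f 0 :: real)"
  by (induction k) (auto simp: atLeastAtMostSuc_conv)

lemma tele2: fixes k :: nat shows "(\<Sum>i\<in>{1..k}. f (Suc i) - f i) = f (Suc k) - (f 1 :: real)"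
  by (induction k) (auto simp: atLeastAtMostSuc_conv)

lemma scale_bound:
  fixes u :: "'a::euclidean_space \<Rightarrow> real" and e :: 'a
  assumes e: "norm e = 1"
    and nonincr: "\<And>x y. norm x \<le> norm y \<Longrightarrow> u y \<le> u x"
    and a: "a > 0" and p: "p > 1" and \<delta>: "\<delta> > 0"
    and I: "I_delta p \<delta> u \<le> ennreal C" and C: "C \<ge> 0"
  shows "u (a *\<^sub>R e) - u ((2 * a) *\<^sub>R e)
     \<le> 6 * \<delta> + 3 * (2 * 4 powr (p - 1) * C / (kap p TYPE('a) * unit_ball_vol DIM('a)) * a powr (p - real DIM('a))) powr (1 / p)"
proof -
  let ?N = "real DIM('a)"
  define Q where "Q = 2 * 4 powr (p - 1) * C / (kap p TYPE('a) * unit_ball_vol DIM('a))"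
  define Dr where "Dr = u (a *\<^sub>R e) - u ((2 * a) *\<^sub>R e)"
  have Q: "Q \<ge> 0" unfolding Q_def using C kap_pos[of p, where 'a='a] by simp
  show ?thesis
  proof (cases "Dr \<le> 6 * \<delta>")
    case True
    then show ?thesis unfolding Dr_def[symmetric] by (smt (verit) powr_ge_zero)
  next
    case False
    define x where "x = Dr / (3 * \<delta>)"
    have x2: "x > 2" unfolding x_def using False \<delta> by (simp add: field_simps)
    define m where "m = nat \<lceil>x\<rceil> - 1"
    have cx: "real_of_int \<lceil>x\<rceil> \<ge> x" "real_of_int \<lceil>x\<rceil> < x + 1" by linarith+
    have cpos: "\<lceil>x\<rceil> \<ge> 3" using x2 cx by linarith
    have n1: "nat \<lceil>x\<rceil> \<ge> 1" using cpos by linarith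
    have n2: "real (nat \<lceil>x\<rceil>) = real_of_int \<lceil>x\<rceil>" using cpos by simp
    have mreal: "real m = real_of_int \<lceil>x\<rceil> - 1" unfolding m_def using n1 n2 by (simp add: of_nat_diff)
    have m2: "m \<ge> 2" unfolding m_def using cpos by linarith
    have xD: "Dr = 3 * x * \<delta>" unfolding x_def using \<delta> by simp
    have "real m < x" "x \<le> real m + 1" using mreal cx by linarith+
    then have m_lt: "3 * real m * \<delta> < Dr" and m_ge: "Dr \<le> 3 * (real m + 1) * \<delta>"
      unfolding xD using \<delta> by simp_all
    obtain g where g: "g > 0" and gap: "\<And>t w. a \<le> t \<Longrightarrow> 0 < w \<Longrightarrow> w \<le> a / 2 \<Longrightarrow> w < g \<Longrightarrow> u (t *\<^sub>R e) \<le> u ((t + w) *\<^sub>R e) + \<delta>"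
      using gap_exists[OF e nonincr a p \<delta> I C] by blast
    define M where "M = nat \<lceil>a / g\<rceil> + 2"
    have M2: "M \<ge> 2" unfolding M_def by simp
    have Mg: "a / M < g"
    proof -
      have "a / g < M" unfolding M_def by linarith
      then have "a < M * g" using g by (simp add: field_simps)
      then show ?thesis using M2 by (simp add: field_simps)
    qed
    have wM: "a / M \<le> a / 2" using M2 a by (intro divide_left_mono) auto
    define \<tau> where "\<tau> i = a + real i * (a / M)" for i
    have \<tau>a: "\<tau> i \<ge> a" for i unfolding \<tau>_def using a by simp
    have \<tau>M: "\<tau> M = 2 * a" unfolding \<tau>_def using M2 by simp
    have \<tau>le: "\<tau> i \<le> 2 * a" if "i \<le> M" for i
    proof -
      have "real i * (a / M) \<le> real M * (a / M)" using that a by (intro mult_right_mono) auto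
      then show ?thesis unfolding \<tau>_def using M2 by simp
    qed
    have nt: "norm (t *\<^sub>R e) = t" if "t \<ge> a" for t using that a e by simp
    have grid: "u (\<tau> (i - 1) *\<^sub>R e) \<le> u (\<tau> i *\<^sub>R e) + \<delta>" if hi: "1 \<le> i" for i
    proof -
      obtain k where k: "i = Suc k" using hi by (cases i) auto
      have eq: "\<tau> i = \<tau> (i - 1) + a / M" unfolding \<tau>_def k by (simp add: distrib_right add_divide_distrib)
      have w0: "0 < a / M" using a M2 by simp
      have "u (\<tau> (i - 1) *\<^sub>R e) \<le> u ((\<tau> (i - 1) + a / M) *\<^sub>R e) + \<delta>" by (rule gap[OF \<tau>a w0 wM Mg])
      then show ?thesis by (simp only: eq)
    qed
    define L where "L j = u (a *\<^sub>R e) - 3 * real j * \<delta>" for j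
    define ij where "ij j = (LEAST i. u (\<tau> i *\<^sub>R e) < L j)" for j
    have exM: "u (\<tau> M *\<^sub>R e) < L j" if "j \<le> m" for j
    proof -
      have "3 * real j * \<delta> \<le> 3 * real m * \<delta>" using that \<delta> by simp
      then show ?thesis unfolding \<tau>M L_def using m_lt unfolding Dr_def by simp
    qed
    have ij: "ij j \<le> M" "u (\<tau> (ij j) *\<^sub>R e) < L j" "ij j \<ge> 1" "L j - \<delta> \<le> u (\<tau> (ij j) *\<^sub>R e)"
      if j: "j \<le> m" for j
    proof -
      show "ij j \<le> M" unfolding ij_def by (rule Least_le) (rule exM[OF j])
      show lt: "u (\<tau> (ij j) *\<^sub>R e) < L j" unfolding ij_def by (rule LeastI) (rule exM[OF j])
      have "\<not> u (\<tau> 0 *\<^sub>R e) < L j" unfolding \<tau>_def L_def using \<delta> by (auto intro!: mult_nonneg_nonneg simp: not_less)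
      then have "ij j \<noteq> 0" using lt by (metis)
      then show i1: "ij j \<ge> 1" by simp
      have "\<not> u (\<tau> (ij j - 1) *\<^sub>R e) < L j" unfolding ij_def
        by (rule not_less_Least) (use i1 in \<open>simp add: ij_def\<close>)
      then show "L j - \<delta> \<le> u (\<tau> (ij j) *\<^sub>R e)" using grid[OF i1] by simp
    qed
    define \<rho> where "\<rho> j = \<tau> (ij j)" for j
    have drop: "u (\<rho> (Suc j) *\<^sub>R e) + \<delta> < u (\<rho> j *\<^sub>R e)" if "j < m" for j
      using ij(2)[of "Suc j"] ij(4)[of j] that \<delta> unfolding \<rho>_def L_def by (simp add: algebra_simps)
    have rmono: "\<rho> j < \<rho> (Suc j)" if "j < m" for j
    proof (rule ccontr)
      assume "\<not> \<rho> j < \<rho> (Suc j)"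
      then have "norm (\<rho> (Suc j) *\<^sub>R e) \<le> norm (\<rho> j *\<^sub>R e)" unfolding \<rho>_def using nt[OF \<tau>a] by simp
      then have "u (\<rho> j *\<^sub>R e) \<le> u (\<rho> (Suc j) *\<^sub>R e)" by (rule nonincr)
      then show False using drop[OF that] \<delta> by simp
    qed
    have r0: "a \<le> \<rho> 0" unfolding \<rho>_def by (rule \<tau>a)
    have rm: "\<rho> m \<le> 2 * a" unfolding \<rho>_def by (intro \<tau>le ij(1)) simp
    have CB: "(\<Sum>i\<in>{1..m-1}. (\<rho> (Suc i) - \<rho> (i - 1)) powr (1 - p))
           * (kap p TYPE('a) * \<delta> powr p * unit_ball_vol DIM('a) * a ^ (DIM('a) - 1)) \<le> C"
      by (rule chain_bound[OF e nonincr a p \<delta> m2 rmono r0 rm drop I C])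
    have rle: "\<rho> i \<le> \<rho> j" if "i \<le> j" "j \<le> m" for i j
      using that
    proof (induction j)
      case 0 then show ?case by simp
    next
      case (Suc j)
      show ?case
      proof (cases "i = Suc j")
        case False
        then have "\<rho> i \<le> \<rho> j" using Suc by simp
        also have "\<rho> j < \<rho> (Suc j)" using Suc rmono by simp
        finally show ?thesis by simp
      qed simp
    qed
    have ssum: "(\<Sum>i\<in>{1..m-1}. \<rho> (Suc i) - \<rho> (i - 1)) \<le> 2 * a"
    proof -
      have "(\<Sum>i\<in>{1..m-1}. \<rho> (Suc i) - \<rho> (i - 1))
          = (\<Sum>i\<in>{1..m-1}. \<rho> (Suc i) - \<rho> i) + (\<Sum>i\<in>{1..m-1}. \<rho> i - \<rho> (i - 1))"
        by (simp add: sum.distrib[symmetric])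
      also have "\<dots> = (\<rho> (Suc (m - 1)) - \<rho> 1) + (\<rho> (m - 1) - \<rho> 0)"
        by (simp only: tele1 tele2)
      also have "\<dots> \<le> 2 * a"
      proof -
        have "Suc (m - 1) = m" using m2 by simp
        moreover have "\<rho> 0 \<le> \<rho> 1" "\<rho> (m - 1) \<le> \<rho> m" using m2 by (auto intro!: rle)
        ultimately show ?thesis using r0 rm by simp
      qed
      finally show ?thesis .
    qed
    have spos: "\<rho> (Suc i) - \<rho> (i - 1) > 0" if "i \<in> {1..m-1}" for i
    proof -
      have "\<rho> (i - 1) \<le> \<rho> i" using that by (intro rle) auto
      moreover have "\<rho> i < \<rho> (Suc i)" using that m2 by (intro rmono) auto
      ultimately show ?thesis by simp
    qed
    have PG: "real (m - 1) powr p * (2 * (2 * a)) powr (1 - p) / 2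
        \<le> (\<Sum>i\<in>{1..m-1}. (\<rho> (Suc i) - \<rho> (i - 1)) powr (1 - p))"
      by (rule pigeon[OF _ _ _ spos ssum p]) (use m2 in auto)
    define Y where "Y = kap p TYPE('a) * \<delta> powr p * unit_ball_vol DIM('a) * a ^ (DIM('a) - 1)"
    have Y: "Y > 0" unfolding Y_def using kap_pos[of p, where 'a='a] \<delta> a by simp
    have "real (m - 1) powr p * (4 * a) powr (1 - p) / 2 * Y \<le> C"
      using mult_right_mono[OF PG less_imp_le[OF Y]] CB unfolding Y_def by simp
    then have key: "real (m - 1) powr p \<le> C * 2 / ((4 * a) powr (1 - p) * Y)"
      using Y a by (simp add: field_simps)
    have a_pow: "a ^ (DIM('a) - 1) = a powr (?N - 1)"
      using a by (simp add: powr_realpow[symmetric] of_nat_diff DIM_positive Suc_leI)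
    have "C * 2 / ((4 * a) powr (1 - p) * Y) = Q * a powr (p - ?N) / \<delta> powr p"
    proof -
      have f1: "(4 * a) powr (1 - p) = 4 powr (1 - p) * a powr (1 - p)" using a by (simp add: powr_mult)
      have f2: "4 powr (p - 1) = 1 / 4 powr (1 - p)" by (simp add: powr_minus_divide[symmetric] powr_minus)
      have f3: "a powr (p - ?N) = 1 / (a powr (1 - p) * a powr (?N - 1))"
        using a by (simp add: powr_add[symmetric] powr_minus_divide[symmetric] powr_minus)
      have pos: "4 powr (1 - p) > 0" "a powr (1 - p) > 0" "a powr (?N - 1) > 0" "\<delta> powr p > 0"
        "kap p TYPE('a) > 0" "unit_ball_vol ?N > 0" using a \<delta> kap_pos[of p, where 'a='a] by auto
      show ?thesis unfolding Q_def Y_def a_pow f1 f2 f3 using pos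
        by (simp add: field_simps)
    qed
    note eqX = this
    have "real (m - 1) powr p * \<delta> powr p \<le> (Q * a powr (p - ?N) / \<delta> powr p) * \<delta> powr p"
      using key[unfolded eqX] by (intro mult_right_mono) auto
    also have "\<dots> = Q * a powr (p - ?N)" using \<delta> by simp
    finally have "real (m - 1) powr p * \<delta> powr p \<le> Q * a powr (p - ?N)" .
    then have "(real (m - 1) * \<delta>) powr p \<le> Q * a powr (p - ?N)"
      using \<delta> by (simp add: powr_mult)
    then have "((real (m - 1) * \<delta>) powr p) powr (1 / p) \<le> (Q * a powr (p - ?N)) powr (1 / p)"
      using p by (intro powr_mono2) auto
    then have md: "real (m - 1) * \<delta> \<le> (Q * a powr (p - ?N)) powr (1 / p)"
      using p \<delta> by (simp add: powr_powr)
    have "Dr \<le> 6 * \<delta> + 3 * (real (m - 1) * \<delta>)" using m_ge m2 by (simp add: of_nat_diff algebra_simps)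
    also have "\<dots> \<le> 6 * \<delta> + 3 * (Q * a powr (p - ?N)) powr (1 / p)" using md by simp
    finally show ?thesis unfolding Dr_def Q_def .
  qed
qed




lemma Lr_pow_lower:
  fixes u :: "'a::euclidean_space \<Rightarrow> real"
  assumes S: "S \<in> sets borel" and c: "c \<ge> 0" and le: "\<And>y. y \<in> S \<Longrightarrow> c \<le> \<bar>u y\<bar>" and r: "r > 0"
  shows "ennreal (c powr r) * emeasure lborel S \<le> Lr_pow r u"
proof -
  have "ennreal (c powr r) * emeasure lborel S = (\<integral>\<^sup>+ y. ennreal (c powr r) * indicator S y \<partial>lborel)"
    using S by (simp add: nn_integral_cmult_indicator)
  also have "\<dots> \<le> Lr_pow r u" unfolding Lr_pow_def
  proof (intro nn_integral_mono)
    fix y show "ennreal (c powr r) * indicator S y \<le> ennreal (\<bar>u y\<bar> powr r)"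
      using le[of y] c r by (cases "y \<in> S") (auto intro!: ennreal_leI powr_mono2)
  qed
  finally show ?thesis .
qed

lemma lp_nonneg:
  fixes u :: "'a::euclidean_space \<Rightarrow> real"
  assumes nonincr: "\<And>x y. norm x \<le> norm y \<Longrightarrow> u y \<le> u x"
    and Lp: "Lr_pow p u \<le> ennreal CL" and p: "p > 0"
  shows "u x \<ge> 0"
proof (rule ccontr)
  assume "\<not> u x \<ge> 0"
  then have c: "- u x > 0" by simp
  define T where "T = max (norm x) 1"
  define K where "K = (- u x) powr p * unit_ball_vol DIM('a)"
  have K: "K > 0" unfolding K_def using c by simp
  define R where "R = T + (\<bar>CL\<bar> + 1) / K"
  have T1: "T \<ge> 1" unfolding T_def by simp
  have RT: "R \<ge> T" unfolding R_def using K by simp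
  define S where "S = ball (0::'a) R - cball 0 T"
  have S: "S \<in> sets borel" unfolding S_def by simp
  have le: "- u x \<le> \<bar>u y\<bar>" if "y \<in> S" for y
  proof -
    have "norm x \<le> norm y" using that unfolding S_def T_def by auto
    then have "u y \<le> u x" by (rule nonincr)
    then show ?thesis using c by simp
  qed
  have mS: "emeasure lborel S = ennreal (unit_ball_vol DIM('a) * (R ^ DIM('a) - T ^ DIM('a)))"
  proof -
    have "S = {y. T < norm y \<and> norm y < R}" unfolding S_def by auto
    then show ?thesis using T1 RT by (simp add: emeasure_shell)
  qed
  have pd: "1 ^ (DIM('a) - 1) * (R - T) \<le> R ^ DIM('a) - T ^ DIM('a)"
    using T1 RT by (intro power_diff_lower) (auto simp: DIM_positive Suc_leI)
  have "ennreal ((- u x) powr p) * emeasure lborel S \<le> ennreal CL"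
    using order_trans[OF Lr_pow_lower[OF S less_imp_le[OF c] le p] Lp] .
  then have "ennreal ((- u x) powr p * (unit_ball_vol DIM('a) * (R ^ DIM('a) - T ^ DIM('a)))) \<le> ennreal CL"
    unfolding mS by (subst ennreal_mult') auto
  moreover have "(- u x) powr p * (unit_ball_vol DIM('a) * (R ^ DIM('a) - T ^ DIM('a))) \<ge> K * (R - T)"
    unfolding K_def using pd c by (simp add: mult.assoc mult_left_mono)
  moreover have "K * (R - T) = \<bar>CL\<bar> + 1" unfolding R_def using K by simp
  ultimately have "ennreal (\<bar>CL\<bar> + 1) \<le> ennreal CL"
    using order_trans[OF ennreal_leI] by metis
  then show False
    by (cases "CL \<ge> 0") (auto simp: ennreal_le_iff2)
qed

lemma lp_bound:
  fixes u :: "'a::euclidean_space \<Rightarrow> real"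
  assumes nonincr: "\<And>x y. norm x \<le> norm y \<Longrightarrow> u y \<le> u x"
    and Lp: "Lr_pow p u \<le> ennreal CL" and p: "p > 0" and CL: "CL \<ge> 0" and x: "x \<noteq> 0"
  shows "u x \<le> (CL / (unit_ball_vol DIM('a) * norm x ^ DIM('a))) powr (1 / p)"
proof -
  have u0: "u x \<ge> 0" by (rule lp_nonneg[OF nonincr Lp p])
  define S where "S = cball (0::'a) (norm x)"
  have S: "S \<in> sets borel" unfolding S_def by simp
  have le: "u x \<le> \<bar>u y\<bar>" if "y \<in> S" for y
  proof -
    have "norm y \<le> norm x" using that unfolding S_def by auto
    then have "u x \<le> u y" by (rule nonincr)
    then show ?thesis by simp
  qed
  have "ennreal (u x powr p) * emeasure lborel S \<le> ennreal CL"
    using Lr_pow_lower[OF S u0 le p] Lp by (rule order_trans)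
  then have "ennreal (u x powr p * (unit_ball_vol DIM('a) * norm x ^ DIM('a))) \<le> ennreal CL"
    unfolding S_def by (subst ennreal_mult') (auto simp: emeasure_cball)
  then have le2: "u x powr p * (unit_ball_vol DIM('a) * norm x ^ DIM('a)) \<le> CL"
    using CL by (simp add: ennreal_le_iff)
  have pos: "unit_ball_vol DIM('a) * norm x ^ DIM('a) > 0" using x by simp
  then have "u x powr p \<le> CL / (unit_ball_vol DIM('a) * norm x ^ DIM('a))"
    using le2 by (simp add: field_simps)
  then have "(u x powr p) powr (1 / p) \<le> (CL / (unit_ball_vol DIM('a) * norm x ^ DIM('a))) powr (1 / p)"
    using p u0 by (intro powr_mono2) auto
  then show ?thesis using p u0 by (simp add: powr_powr)
qed

lemma half_pow_powr:
  assumes "g \<ge> 0"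
  shows "((1/2::real) ^ n) powr (- g) = (2 powr g) ^ n"
proof -
  have "((1/2::real) ^ n) powr (- g) = ((1/2) powr real n) powr (- g)" by (simp add: powr_realpow)
  also have "\<dots> = (1/2) powr (- (real n * g))" by (simp add: powr_powr)
  also have "\<dots> = 2 powr (real n * g)" by (simp add: powr_minus_divide powr_divide)
  also have "\<dots> = (2 powr g) powr real n" by (simp add: powr_powr mult.commute)
  also have "\<dots> = (2 powr g) ^ n" by (simp add: powr_realpow)
  finally show ?thesis .
qed

lemma small_bound:
  fixes u :: "'a::euclidean_space \<Rightarrow> real" and e :: 'a
  assumes e: "norm e = 1"
    and nonincr: "\<And>x y. norm x \<le> norm y \<Longrightarrow> u y \<le> u x"
    and p: "1 < p" "p < real DIM('a)" and \<delta>: "0 < \<delta>" "\<delta> \<le> \<delta>m"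
    and I: "I_delta p \<delta> u \<le> ennreal CI" and CI: "CI \<ge> 0"
    and Lp: "Lr_pow p u \<le> ennreal CL" and CL: "CL \<ge> 0"
  shows "u (((1/2) ^ k) *\<^sub>R e) \<le> (CL / unit_ball_vol DIM('a)) powr (1 / p)
     + (6 * \<delta>m + 3 * (2 * 4 powr (p - 1) * CI / (kap p TYPE('a) * unit_ball_vol DIM('a))) powr (1 / p))
       * (2 powr ((real DIM('a) - p) / p)) / (2 powr ((real DIM('a) - p) / p) - 1)
       * (2 powr ((real DIM('a) - p) / p)) ^ k"
proof -
  let ?N = "real DIM('a)"
  define \<gamma> where "\<gamma> = (?N - p) / p"
  define lam where "lam = 2 powr \<gamma>"
  define Q where "Q = 2 * 4 powr (p - 1) * CI / (kap p TYPE('a) * unit_ball_vol DIM('a))"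
  define K where "K = 6 * \<delta>m + 3 * Q powr (1 / p)"
  define A where "A = (CL / unit_ball_vol DIM('a)) powr (1 / p)"
  define K' where "K' = K * lam / (lam - 1)"
  have \<gamma>: "\<gamma> > 0" unfolding \<gamma>_def using p by simp
  have "2 powr 0 < 2 powr \<gamma>" by (rule powr_less_mono) (use \<gamma> in auto)
  then have lam: "lam > 1" unfolding lam_def by simp
  have Q: "Q \<ge> 0" unfolding Q_def using CI kap_pos[of p, where 'a='a] by simp
  have step: "u (a *\<^sub>R e) - u ((2 * a) *\<^sub>R e) \<le> K * a powr (- \<gamma>)" if a: "0 < a" "a \<le> 1" for a
  proof -
    have sb: "u (a *\<^sub>R e) - u ((2 * a) *\<^sub>R e) \<le> 6 * \<delta> + 3 * (Q * a powr (p - ?N)) powr (1 / p)"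
      unfolding Q_def by (rule scale_bound[OF e nonincr a(1) p(1) \<delta>(1) I CI])
    have e1: "(Q * a powr (p - ?N)) powr (1 / p) = Q powr (1 / p) * (a powr (p - ?N)) powr (1 / p)"
      by (rule powr_mult)
    have e2: "(p - ?N) * (1 / p) = - \<gamma>" unfolding \<gamma>_def using p by (simp add: field_simps)
    have "(Q * a powr (p - ?N)) powr (1 / p) = Q powr (1 / p) * a powr (- \<gamma>)"
      unfolding e1 powr_powr e2 ..
    moreover have ag: "a powr (- \<gamma>) \<ge> 1"
    proof -
      have "1 powr (- \<gamma>) \<le> a powr (- \<gamma>)" using a \<gamma> by (intro powr_mono2') auto
      then show ?thesis by simp
    qed
    moreover have "6 * \<delta> \<le> 6 * \<delta>m * a powr (- \<gamma>)"
    proof -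
      have "6 * \<delta> \<le> 6 * \<delta>m" using \<delta> by simp
      also have "\<dots> \<le> 6 * \<delta>m * a powr (- \<gamma>)" using ag \<delta> by simp
      finally show ?thesis .
    qed
    ultimately show ?thesis using sb unfolding K_def by (simp add: distrib_right)
  qed
  have K: "K \<ge> 0" unfolding K_def using \<delta> by simp
  have main: "u (((1/2) ^ k) *\<^sub>R e) \<le> A + K' * lam ^ k" for k
  proof (induction k)
    case 0
    have "u e \<le> (CL / (unit_ball_vol DIM('a) * norm e ^ DIM('a))) powr (1 / p)"
      using e p CL by (intro lp_bound[OF nonincr Lp]) auto
    moreover have "K' \<ge> 0" unfolding K'_def using K lam by simp
    ultimately show ?case using e unfolding A_def by simp
  next
    case (Suc k)
    define a where "a = (1/2::real) ^ Suc k"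
    have a1: "a \<le> 1" unfolding a_def by (rule power_le_one) auto
    have a: "0 < a" "a \<le> 1" using a1 unfolding a_def by auto
    have 2: "2 * a = (1/2) ^ k" unfolding a_def by simp
    have ap: "a powr (- \<gamma>) = lam ^ Suc k" unfolding a_def lam_def by (rule half_pow_powr) (use \<gamma> in simp)
    have c1: "u (a *\<^sub>R e) \<le> u (((1/2) ^ k) *\<^sub>R e) + K * lam ^ Suc k" using step[OF a] unfolding 2 ap by simp
    have c3: "K' * lam ^ k + K * lam ^ Suc k = K' * lam ^ Suc k"
    proof -
      have "K' * (lam - 1) = K * lam" unfolding K'_def using lam by simp
      then have h: "K' * lam = K' + K * lam" by (simp add: algebra_simps)
      have "K' * lam ^ Suc k = (K' * lam) * lam ^ k" by simp
      also have "\<dots> = (K' + K * lam) * lam ^ k" by (simp only: h)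
      also have "\<dots> = K' * lam ^ k + K * lam ^ Suc k" by (simp add: algebra_simps)
      finally show ?thesis by simp
    qed
    show ?case using c1 c3 Suc.IH unfolding a_def by linarith
  qed
  then show ?thesis unfolding A_def K'_def K_def Q_def lam_def \<gamma>_def .
qed

definition InS :: "nat \<Rightarrow> 'a::euclidean_space set" where
  "InS k = {x. (1/2) ^ Suc k < norm x \<and> norm x \<le> (1/2) ^ k}"

definition OutS :: "nat \<Rightarrow> 'a::euclidean_space set" where
  "OutS k = {x. 2 ^ k < norm x \<and> norm x \<le> 2 ^ Suc k}"

definition Hd :: "real \<Rightarrow> (nat \<Rightarrow> real) \<Rightarrow> (nat \<Rightarrow> real) \<Rightarrow> 'a::euclidean_space \<Rightarrow> ennreal" where
  "Hd r bI bO x = (\<Sum>k. ennreal (bI k powr r) * indicator (InS k) x) + (\<Sum>k. ennreal (bO k powr r) * indicator (OutS k) x)"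

lemma InS_meas[measurable]: "InS k \<in> sets borel" unfolding InS_def by measurable
lemma OutS_meas[measurable]: "OutS k \<in> sets borel" unfolding OutS_def by measurable

lemma Hd_meas[measurable]: "Hd r bI bO \<in> borel_measurable borel"
  unfolding Hd_def by measurable

lemma shells_cover:
  fixes x :: "'a::euclidean_space"
  assumes "x \<noteq> 0"
  shows "(\<exists>k. x \<in> InS k) \<or> (\<exists>k. x \<in> OutS k)"
proof (cases "norm x \<le> 1")
  case True
  have nx: "norm x > 0" using assms by simp
  obtain n where n: "(1/2::real) ^ n < norm x" using real_arch_pow_inv[OF nx, of "1/2"] by auto
  define k where "k = (LEAST n. (1/2::real) ^ Suc n < norm x)"
  have ex: "(1/2::real) ^ Suc n < norm x" using n by (rule le_less_trans[rotated]) (simp add: power_Suc)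
  have k1: "(1/2::real) ^ Suc k < norm x" unfolding k_def by (rule LeastI) (rule ex)
  have k2: "norm x \<le> (1/2) ^ k"
  proof (cases k)
    case 0 then show ?thesis using True by simp
  next
    case (Suc j)
    have jk: "j < k" using Suc by simp
    have "\<not> (1/2::real) ^ Suc j < norm x" using not_less_Least[OF jk[unfolded k_def]] .
    then show ?thesis using Suc by simp
  qed
  show ?thesis using k1 k2 unfolding InS_def by auto
next
  case False
  obtain n where n: "norm x < (2::real) ^ n" using real_arch_pow[of 2 "norm x"] by auto
  define k where "k = (LEAST n. norm x \<le> (2::real) ^ Suc n)"
  have ex: "norm x \<le> (2::real) ^ Suc n" using n power_increasing[of n "Suc n" "2::real"] by linarith
  have k1: "norm x \<le> (2::real) ^ Suc k" unfolding k_def by (rule LeastI) (rule ex)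
  have k2: "2 ^ k < norm x"
  proof (cases k)
    case 0 then show ?thesis using False by simp
  next
    case (Suc j)
    have jk: "j < k" using Suc by simp
    have "\<not> norm x \<le> (2::real) ^ Suc j" using not_less_Least[OF jk[unfolded k_def]] .
    then show ?thesis using Suc by simp
  qed
  show ?thesis using k1 k2 unfolding OutS_def by auto
qed

lemma AE_nonzero: "AE x in lborel. (x::'a::euclidean_space) \<noteq> 0"
proof (rule AE_I')
  show "sphere (0::'a) 0 \<in> null_sets lborel" by (rule null_sphere)
qed auto

lemma ennreal_le_suminf: "(f k :: ennreal) \<le> (\<Sum>k. f k)"
proof -
  have "f k \<le> sum f {..<Suc k}" by (rule member_le_sum) auto
  also have "\<dots> \<le> (\<Sum>k. f k)" by (rule sum_le_suminf) auto
  finally show ?thesis .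
qed

lemma dom_point:
  fixes v :: "'a::euclidean_space \<Rightarrow> real"
  assumes AE: "AE x in lborel. (\<forall>k. x \<in> InS k \<longrightarrow> \<bar>v x\<bar> \<le> bI k) \<and> (\<forall>k. x \<in> OutS k \<longrightarrow> \<bar>v x\<bar> \<le> bO k)"
    and r: "r > 0"
  shows "AE x in lborel. ennreal (\<bar>v x\<bar> powr r) \<le> Hd r bI bO x"
  using AE AE_nonzero
proof eventually_elim
  case (elim x)
  show ?case
  proof (cases "\<exists>k. x \<in> InS k")
    case True
    then obtain k where k: "x \<in> InS k" by auto
    have "ennreal (\<bar>v x\<bar> powr r) \<le> ennreal (bI k powr r) * indicator (InS k) x"
      using k elim r by (auto intro!: ennreal_leI powr_mono2)
    also have "\<dots> \<le> (\<Sum>k. ennreal (bI k powr r) * indicator (InS k) x)" by (rule ennreal_le_suminf)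
    also have "\<dots> \<le> Hd r bI bO x" unfolding Hd_def by simp
    finally show ?thesis .
  next
    case False
    then obtain k where k: "x \<in> OutS k" using shells_cover[OF elim(2)] by auto
    have "ennreal (\<bar>v x\<bar> powr r) \<le> ennreal (bO k powr r) * indicator (OutS k) x"
      using k elim r by (auto intro!: ennreal_leI powr_mono2)
    also have "\<dots> \<le> (\<Sum>k. ennreal (bO k powr r) * indicator (OutS k) x)" by (rule ennreal_le_suminf)
    also have "\<dots> \<le> Hd r bI bO x" unfolding Hd_def by simp
    finally show ?thesis .
  qed
qed

lemma Hd_finite:
  assumes bI: "\<And>k. bI k \<ge> 0" and bO: "\<And>k. bO k \<ge> 0"
    and sI: "summable (\<lambda>k. bI k powr r * (unit_ball_vol DIM('a) * ((1/2) ^ k) ^ DIM('a)))"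
    and sO: "summable (\<lambda>k. bO k powr r * (unit_ball_vol DIM('a) * (2 ^ Suc k) ^ DIM('a)))"
  shows "(\<integral>\<^sup>+ x. Hd r bI bO (x::'a::euclidean_space) \<partial>lborel) < \<infinity>"
proof -
  have mI: "emeasure lborel (InS k :: 'a set) \<le> ennreal (unit_ball_vol DIM('a) * ((1/2) ^ k) ^ DIM('a))" for k
  proof -
    have "InS k \<subseteq> cball (0::'a) ((1/2) ^ k)" unfolding InS_def by auto
    then have "emeasure lborel (InS k :: 'a set) \<le> emeasure lborel (cball (0::'a) ((1/2) ^ k))"
      by (intro emeasure_mono) auto
    then show ?thesis by (simp add: emeasure_cball)
  qed
  have mO: "emeasure lborel (OutS k :: 'a set) \<le> ennreal (unit_ball_vol DIM('a) * (2 ^ Suc k) ^ DIM('a))" for k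
  proof -
    have "OutS k \<subseteq> cball (0::'a) (2 ^ Suc k)" unfolding OutS_def by auto
    then have "emeasure lborel (OutS k :: 'a set) \<le> emeasure lborel (cball (0::'a) (2 ^ Suc k))"
      by (intro emeasure_mono) auto
    then show ?thesis by (simp add: emeasure_cball)
  qed
  have "(\<integral>\<^sup>+ x. Hd r bI bO (x::'a) \<partial>lborel)
     = (\<Sum>k. ennreal (bI k powr r) * emeasure lborel (InS k :: 'a set)) + (\<Sum>k. ennreal (bO k powr r) * emeasure lborel (OutS k :: 'a set))"
    unfolding Hd_def by (simp add: nn_integral_add nn_integral_suminf nn_integral_cmult_indicator)
  also have "\<dots> \<le> (\<Sum>k. ennreal (bI k powr r * (unit_ball_vol DIM('a) * ((1/2) ^ k) ^ DIM('a))))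
       + (\<Sum>k. ennreal (bO k powr r * (unit_ball_vol DIM('a) * (2 ^ Suc k) ^ DIM('a))))"
  proof -
    have tI: "ennreal (bI k powr r) * emeasure lborel (InS k :: 'a set) \<le> ennreal (bI k powr r * (unit_ball_vol DIM('a) * ((1/2) ^ k) ^ DIM('a)))" for k
      by (subst ennreal_mult'[OF powr_ge_zero]) (intro mult_left_mono mI, simp)
    have tO: "ennreal (bO k powr r) * emeasure lborel (OutS k :: 'a set) \<le> ennreal (bO k powr r * (unit_ball_vol DIM('a) * (2 ^ Suc k) ^ DIM('a)))" for k
      by (subst ennreal_mult'[OF powr_ge_zero]) (intro mult_left_mono mO, simp)
    show ?thesis by (intro add_mono suminf_le tI tO summableI)
  qed
  also have "\<dots> = ennreal (\<Sum>k. bI k powr r * (unit_ball_vol DIM('a) * ((1/2) ^ k) ^ DIM('a)))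
       + ennreal (\<Sum>k. bO k powr r * (unit_ball_vol DIM('a) * (2 ^ Suc k) ^ DIM('a)))"
    using sI sO by (simp add: suminf_ennreal2)
  also have "\<dots> < \<infinity>" by (simp add: ennreal_plus[symmetric] del: ennreal_plus)
  finally show ?thesis .
qed

lemma pow_powr: "(y::real) > 0 \<Longrightarrow> (y ^ n) powr r = (y powr r) ^ n"
proof -
  assume y: "y > 0"
  have "(y ^ n) powr r = (y powr real n) powr r" using y by (simp add: powr_realpow)
  also have "\<dots> = (y powr r) powr real n" by (simp add: powr_powr mult.commute)
  also have "\<dots> = (y powr r) ^ n" using y by (simp add: powr_realpow)
  finally show ?thesis .
qed

lemma summable_In:
  fixes c E lam r :: real
  assumes c: "c \<ge> 0" "E \<ge> 0" and lam: "lam > 0" and q: "lam powr r * (1/2) ^ DIM('a::euclidean_space) < 1"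
  shows "summable (\<lambda>k. (c * (E * lam ^ Suc k)) powr r * (unit_ball_vol DIM('a) * ((1/2) ^ k) ^ DIM('a)))"
proof -
  have eq: "(c * (E * lam ^ Suc k)) powr r * (unit_ball_vol DIM('a) * ((1/2) ^ k) ^ DIM('a))
     = ((c * E * lam) powr r * unit_ball_vol DIM('a)) * (lam powr r * (1/2) ^ DIM('a)) ^ k" for k
  proof -
    have "(c * (E * lam ^ Suc k)) powr r = (c * E * lam) powr r * (lam ^ k) powr r"
      using c lam by (simp add: powr_mult mult.assoc)
    also have "(lam ^ k) powr r = (lam powr r) ^ k" using lam by (rule pow_powr)
    finally have 1: "(c * (E * lam ^ Suc k)) powr r = (c * E * lam) powr r * (lam powr r) ^ k" .
    have 2: "((1/2::real) ^ k) ^ DIM('a) = ((1/2) ^ DIM('a)) ^ k" by (simp add: power_mult[symmetric] mult.commute)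
    show ?thesis unfolding 1 2 by (simp add: power_mult_distrib)
  qed
  have "summable (\<lambda>k. ((c * E * lam) powr r * unit_ball_vol DIM('a)) * (lam powr r * (1/2) ^ DIM('a)) ^ k)"
    using q by (intro summable_mult summable_geometric) simp
  then show ?thesis unfolding eq .
qed

lemma summable_Out:
  fixes c B mu r :: real
  assumes c: "c \<ge> 0" "B \<ge> 0" and mu: "mu > 0" and q: "mu powr r * 2 ^ DIM('a::euclidean_space) < 1"
  shows "summable (\<lambda>k. (c * (B * mu ^ k)) powr r * (unit_ball_vol DIM('a) * (2 ^ Suc k) ^ DIM('a)))"
proof -
  have eq: "(c * (B * mu ^ k)) powr r * (unit_ball_vol DIM('a) * (2 ^ Suc k) ^ DIM('a))
     = ((c * B) powr r * unit_ball_vol DIM('a) * 2 ^ DIM('a)) * (mu powr r * 2 ^ DIM('a)) ^ k" for k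
  proof -
    have "(c * (B * mu ^ k)) powr r = (c * B) powr r * (mu ^ k) powr r"
      using c mu by (simp add: powr_mult mult.assoc)
    also have "(mu ^ k) powr r = (mu powr r) ^ k" using mu by (rule pow_powr)
    finally have 1: "(c * (B * mu ^ k)) powr r = (c * B) powr r * (mu powr r) ^ k" .
    have 2: "((2::real) ^ Suc k) ^ DIM('a) = 2 ^ DIM('a) * (2 ^ DIM('a)) ^ k"
      by (simp add: power_mult[symmetric] power_add[symmetric] mult.commute)
    show ?thesis unfolding 1 2 by (simp add: power_mult_distrib)
  qed
  have "summable (\<lambda>k. ((c * B) powr r * unit_ball_vol DIM('a) * 2 ^ DIM('a)) * (mu powr r * 2 ^ DIM('a)) ^ k)"
    using q mu by (intro summable_mult summable_geometric) simp
  then show ?thesis unfolding eq .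
qed

lemma out_bound:
  fixes CL w p t :: real
  assumes CL: "CL \<ge> 0" and w: "w > 0" and p: "p > 0" and t: "2 ^ k < t" and N: "N \<ge> 1"
  shows "(CL / (w * t ^ N)) powr (1 / p) \<le> (CL / w) powr (1 / p) * (2 powr (- real N / p)) ^ k"
proof -
  have tp: "t > 0" using t by (smt (verit) zero_less_power)
  have "(2::real) ^ k \<le> t" using t by simp
  then have "((2::real) ^ k) ^ N \<le> t ^ N" by (intro power_mono) auto
  then have "CL / (w * t ^ N) \<le> CL / (w * ((2::real) ^ k) ^ N)"
    using CL w tp by (intro divide_left_mono mult_left_mono mult_pos_pos) auto
  then have "(CL / (w * t ^ N)) powr (1 / p) \<le> (CL / (w * ((2::real) ^ k) ^ N)) powr (1 / p)"
    using CL w tp p by (intro powr_mono2) auto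
  also have "CL / (w * ((2::real) ^ k) ^ N) = (CL / w) * (2 powr (- real N)) ^ k"
  proof -
    have "((2::real) ^ k) ^ N = ((2::real) ^ N) ^ k" by (simp add: power_mult[symmetric] mult.commute)
    moreover have "(2 powr (- real N)) ^ k = 1 / ((2::real) ^ N) ^ k"
      by (simp add: powr_minus powr_realpow power_inverse divide_inverse)
    ultimately show ?thesis by simp
  qed
  also have "((CL / w) * (2 powr (- real N)) ^ k) powr (1 / p) = (CL / w) powr (1 / p) * ((2 powr (- real N)) ^ k) powr (1 / p)"
    by (rule powr_mult)
  also have "((2 powr (- real N)) ^ k) powr (1 / p) = ((2 powr (- real N)) powr (1 / p)) ^ k"
    by (rule pow_powr) simp
  also have "(2 powr (- real N)) powr (1 / p) = 2 powr (- real N / p)" by (simp add: powr_powr)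
  finally show ?thesis .
qed

lemma minus_one_less': "x - 1 < (x::real)"
  by simp

theorem Helly_selection':
  fixes f :: "nat \<Rightarrow> real \<Rightarrow> real" and M :: "real \<Rightarrow> real"
  assumes mono: "\<And>n. mono (f n)"
  assumes bdd: "\<And>n x. \<bar>f n x\<bar> \<le> M x"
  shows "\<exists>s. strict_mono (s::nat \<Rightarrow> nat) \<and> (\<exists>F. mono F \<and>
    (\<forall>x. continuous (at x) F \<longrightarrow> (\<lambda>n. f (s n) x) \<longlonglongrightarrow> F x))"
proof -
  obtain m :: "real \<Rightarrow> nat" where "bij_betw m \<rat> UNIV"
    using countable_rat Rats_infinite by (erule countableE_infinite)
  then obtain r :: "nat \<Rightarrow> real" where bij: "bij_betw r UNIV \<rat>"
    using bij_betw_inv by blast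
  have dense_r: "\<And>x y. x < y \<Longrightarrow> \<exists>n. x < r n \<and> r n < y"
    by (metis Rats_dense_in_real bij f_the_inv_into_f bij_betw_def)
  let ?P = "\<lambda>n. \<lambda>s. convergent (\<lambda>k. f (s k) (r n))"
  interpret nat: subseqs ?P
  proof (unfold convergent_def, unfold subseqs_def, auto)
    fix n :: nat and s :: "nat \<Rightarrow> nat" assume s: "strict_mono s"
    have "bounded {-M (r n)..M (r n)}"
      using bounded_closed_interval by auto
    moreover have "\<And>k. f (s k) (r n) \<in> {-M (r n)..M (r n)}"
      using bdd by (simp add: abs_le_iff minus_le_iff)
    ultimately have "\<exists>l s'. strict_mono s' \<and> ((\<lambda>k. f (s k) (r n)) \<circ> s') \<longlonglongrightarrow> l"
      using compact_Icc compact_imp_seq_compact seq_compactE by metis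
    thus "\<exists>s'. strict_mono (s'::nat\<Rightarrow>nat) \<and> (\<exists>l. (\<lambda>k. f (s (s' k)) (r n)) \<longlonglongrightarrow> l)"
      by (auto simp: comp_def)
  qed
  define d where "d = nat.diagseq"
  have subseq: "strict_mono d"
    unfolding d_def using nat.subseq_diagseq by auto
  have rat_cnv: "?P n d" for n
  proof -
    have Pn_seqseq: "?P n (nat.seqseq (Suc n))"
      by (rule nat.seqseq_holds)
    have 1: "(\<lambda>k. f ((nat.seqseq (Suc n) \<circ> (\<lambda>k. nat.fold_reduce (Suc n) k
      (Suc n + k))) k) (r n)) = (\<lambda>k. f (nat.seqseq (Suc n) k) (r n)) \<circ>
      (\<lambda>k. nat.fold_reduce (Suc n) k (Suc n + k))"
      by auto
    have 2: "?P n (d \<circ> ((+) (Suc n)))"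
      unfolding d_def nat.diagseq_seqseq 1
      by (intro convergent_subseq_convergent Pn_seqseq nat.subseq_diagonal_rest)
    then obtain L where 3: "(\<lambda>na. f (d (na + Suc n)) (r n)) \<longlonglongrightarrow> L"
      by (auto simp: add.commute dest: convergentD)
    then have "(\<lambda>k. f (d k) (r n)) \<longlonglongrightarrow> L"
      by (rule LIMSEQ_offset)
    then show ?thesis
      by (auto simp: convergent_def)
  qed
  let ?f = "\<lambda>n. \<lambda>k. f (d k) (r n)"
  have lim_f: "?f n \<longlonglongrightarrow> lim (?f n)" for n
    using rat_cnv convergent_LIMSEQ_iff by auto
  have lim_lower: "- M x \<le> lim (?f n)" if "x < r n" for x n
  proof (rule LIMSEQ_le_const[OF lim_f], intro exI allI impI)
    fix k
    have "f (d k) x \<le> f (d k) (r n)" using that mono[THEN monoD] by simp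
    moreover have "- M x \<le> f (d k) x" using bdd[of "d k" x] by simp
    ultimately show "- M x \<le> f (d k) (r n)" by simp
  qed
  then have bdd_below: "bdd_below {lim (?f n) |n. x < r n}" for x
    unfolding bdd_below_def by blast
  have r_unbdd: "\<exists>n. x < r n" for x
    using dense_r[OF less_add_one, of x] by auto
  then have nonempty: "{lim (?f n) |n. x < r n} \<noteq> {}" for x
    by auto
  define F where "F x = Inf {lim (?f n) |n. x < r n}" for x
  have F_eq: "ereal (F x) = (INF n\<in>{n. x < r n}. ereal (lim (?f n)))" for x
    unfolding F_def by (subst ereal_Inf'[OF bdd_below nonempty]) (simp add: setcompr_eq_image image_comp)
  have mono_F: "mono F"
    using nonempty by (auto intro!: cInf_superset_mono simp: F_def bdd_below mono_def)
  moreover have "(\<lambda>n. f (d n) x) \<longlonglongrightarrow> F x" if cts: "continuous (at x) F" for x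
  proof (rule limsup_le_liminf_real)
    show "limsup (\<lambda>n. f (d n) x) \<le> F x"
    proof (rule tendsto_lowerbound)
      show "(F \<longlongrightarrow> ereal (F x)) (at_right x)"
        using cts unfolding continuous_at_split by (auto simp: continuous_within)
      show "\<forall>\<^sub>F i in at_right x. limsup (\<lambda>n. f (d n) x) \<le> F i"
        unfolding eventually_at_right[OF less_add_one]
      proof (rule, rule, rule less_add_one, safe)
        fix y assume y: "x < y"
        with dense_r obtain N where "x < r N" "r N < y" by auto
        have *: "y < r n' \<Longrightarrow> lim (?f N) \<le> lim (?f n')" for n'
          using \<open>r N < y\<close> by (intro LIMSEQ_le[OF lim_f lim_f]) (auto intro!: mono[THEN monoD])
        have "limsup (\<lambda>n. f (d n) x) \<le> limsup (?f N)"
          using \<open>x < r N\<close> by (auto intro!: Limsup_mono always_eventually mono[THEN monoD])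
        also have "\<dots> = lim (\<lambda>n. ereal (?f N n))"
          using rat_cnv[of N] by (force intro!: convergent_limsup_cl simp: convergent_def)
        also have "\<dots> \<le> F y"
          by (auto intro!: INF_greatest * simp: convergent_real_imp_convergent_ereal rat_cnv F_eq)
        finally show "limsup (\<lambda>n. f (d n) x) \<le> F y" .
      qed
    qed simp
    show "F x \<le> liminf (\<lambda>n. f (d n) x)"
    proof (rule tendsto_upperbound)
      show "(F \<longlongrightarrow> ereal (F x)) (at_left x)"
        using cts unfolding continuous_at_split by (auto simp: continuous_within)
      show "\<forall>\<^sub>F i in at_left x. F i \<le> liminf (\<lambda>n. f (d n) x)"
        unfolding eventually_at_left[OF minus_one_less']
      proof (rule, rule, rule minus_one_less', safe)
        fix y assume y: "y < x"
        with dense_r obtain N where "y < r N" "r N < x" by auto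
        have "F y \<le> liminf (?f N)"
          using \<open>y < r N\<close> by (auto simp: F_eq convergent_real_imp_convergent_ereal
            rat_cnv convergent_liminf_cl intro!: INF_lower2)
        also have "\<dots> \<le> liminf (\<lambda>n. f (d n) x)"
          using \<open>r N < x\<close> by (auto intro!: Liminf_mono monoD[OF mono] always_eventually)
        finally show "F y \<le> liminf (\<lambda>n. f (d n) x)" .
      qed
    qed simp
  qed
  ultimately show ?thesis using subseq by auto
qed




lemma radial_borel:
  fixes u :: "'a::euclidean_space \<Rightarrow> real" and e :: 'a
  assumes e: "norm e = 1" and nonincr: "\<And>x y. norm x \<le> norm y \<Longrightarrow> u y \<le> u x"
  shows "u \<in> borel_measurable lborel"
proof -
  define \<psi> where "\<psi> t = - u (max t 0 *\<^sub>R e)" for t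
  have "mono \<psi>"
  proof (rule monoI)
    fix s t :: real assume "s \<le> t"
    then have "norm (max s 0 *\<^sub>R e) \<le> norm (max t 0 *\<^sub>R e)" using e by auto
    then show "\<psi> s \<le> \<psi> t" unfolding \<psi>_def using nonincr by simp
  qed
  then have [measurable]: "\<psi> \<in> borel_measurable borel" by (rule borel_measurable_mono)
  have eq: "u x = - \<psi> (norm x)" for x
  proof -
    have "norm (max (norm x) 0 *\<^sub>R e) = norm x" using e by simp
    then have "u x = u (max (norm x) 0 *\<^sub>R e)" using nonincr by (metis order_refl antisym)
    then show ?thesis unfolding \<psi>_def by simp
  qed
  have ueq: "u = (\<lambda>x. - \<psi> (norm x))" by (rule ext) (rule eq)
  show ?thesis unfolding ueq by measurable
qed

theorem theorem3p3:
  fixes p :: real and \<delta> :: "nat \<Rightarrow> real" and u :: "nat \<Rightarrow> 'a::euclidean_space \<Rightarrow> real"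
  assumes p: "1 < p" "p < real DIM('a)"
    and \<delta>_pos: "\<And>n. \<delta> n > 0"
    and \<delta>_lim: "\<delta> \<longlonglongrightarrow> 0"
    and meas: "\<And>n. u n \<in> borel_measurable lebesgue"
    and radial: "\<And>n x y. norm x = norm y \<Longrightarrow> u n x = u n y"
    and nonincr: "\<And>n x y. norm x \<le> norm y \<Longrightarrow> u n y \<le> u n x"
    and Lp_bdd: "\<exists>C. \<forall>n. Lr_pow p (u n) \<le> ennreal C"
    and I_bdd: "\<exists>C. \<forall>n. I_delta p (\<delta> n) (u n) \<le> ennreal C"
  shows "\<forall>r. p < r \<and> r < real DIM('a) * p / (real DIM('a) - p) \<longrightarrow> precompact_Lr r u"
proof (intro allI impI)
  fix r assume r: "p < r \<and> r < real DIM('a) * p / (real DIM('a) - p)"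
  let ?N = "real DIM('a)"
  let ?w = "unit_ball_vol ?N"
  have p0: "p > 0" using p(1) by linarith
  have r0: "r > 0" using r p0 by linarith
  obtain CL0 where CL0: "\<And>n. Lr_pow p (u n) \<le> ennreal CL0" using Lp_bdd by blast
  define CL where "CL = max CL0 0"
  have CL: "CL \<ge> 0" unfolding CL_def by simp
  have Lp: "Lr_pow p (u n) \<le> ennreal CL" for n
    using CL0[of n] unfolding CL_def by (rule order_trans) (intro ennreal_leI, simp)
  obtain CI0 where CI0: "\<And>n. I_delta p (\<delta> n) (u n) \<le> ennreal CI0" using I_bdd by blast
  define CI where "CI = max CI0 0"
  have CI: "CI \<ge> 0" unfolding CI_def by simp
  have Ib: "I_delta p (\<delta> n) (u n) \<le> ennreal CI" for n
    using CI0[of n] unfolding CI_def by (rule order_trans) (intro ennreal_leI, simp)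
  obtain \<delta>m where \<delta>m: "\<And>n. \<delta> n \<le> \<delta>m"
  proof -
    have "Bseq \<delta>" using \<delta>_lim by (intro convergent_imp_Bseq) (auto simp: convergent_def)
    then obtain K where "\<forall>n. norm (\<delta> n) \<le> K" by (auto elim: BseqE)
    then show ?thesis using that by (metis abs_le_D1 real_norm_def)
  qed
  obtain e :: 'a where eB: "e \<in> Basis" using nonempty_Basis by blast
  have e: "norm e = 1" using eB by simp
  define \<gamma> where "\<gamma> = (?N - p) / p"
  define lam where "lam = 2 powr \<gamma>"
  define Q where "Q = 2 * 4 powr (p - 1) * CI / (kap p TYPE('a) * ?w)"
  define Kc where "Kc = 6 * \<delta>m + 3 * Q powr (1 / p)"
  define A where "A = (CL / ?w) powr (1 / p)"
  define K' where "K' = Kc * lam / (lam - 1)"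
  define E where "E = A + K'"
  define mu where "mu = 2 powr (- ?N / p)"
  define bI where "bI k = E * lam ^ Suc k" for k
  define bO where "bO k = A * mu ^ k" for k
  have \<gamma>: "\<gamma> > 0" unfolding \<gamma>_def using p by simp
  have "2 powr 0 < 2 powr \<gamma>" by (rule powr_less_mono) (use \<gamma> in auto)
  then have lam: "lam > 1" unfolding lam_def by simp
  have \<delta>m0: "\<delta>m \<ge> 0" using \<delta>m[of 0] \<delta>_pos[of 0] by simp
  have Kc: "Kc \<ge> 0" unfolding Kc_def using \<delta>m0 by simp
  have A: "A \<ge> 0" unfolding A_def by simp
  have K': "K' \<ge> 0" unfolding K'_def using Kc lam by simp
  have E: "E \<ge> 0" unfolding E_def using A K' by simp
  have mu: "mu > 0" unfolding mu_def by simp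
  have nonneg: "u n x \<ge> 0" for n x by (rule lp_nonneg[OF nonincr[where n=n] Lp[of n] p0])
  have boundI: "u n x \<le> bI k" if x: "x \<in> InS k" for n x k
  proof -
    have "norm (((1/2::real) ^ Suc k) *\<^sub>R e) \<le> norm x" using x e unfolding InS_def by simp
    then have "u n x \<le> u n (((1/2::real) ^ Suc k) *\<^sub>R e)" by (rule nonincr)
    also have "\<dots> \<le> A + K' * lam ^ Suc k"
      unfolding A_def K'_def Kc_def Q_def lam_def \<gamma>_def
      by (rule small_bound[OF e nonincr[where n=n] p \<delta>_pos[of n] \<delta>m[of n] Ib[of n] CI Lp[of n] CL])
    also have "\<dots> \<le> bI k"
    proof -
      have "1 \<le> lam ^ Suc k" using lam by (intro one_le_power) simp
      then have "A \<le> A * lam ^ Suc k" using A by (simp add: mult_le_cancel_left1)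
      then show ?thesis unfolding bI_def E_def by (simp add: distrib_right)
    qed
    finally show ?thesis .
  qed
  have boundO: "u n x \<le> bO k" if x: "x \<in> OutS k" for n x k
  proof -
    have x0: "x \<noteq> 0" using x unfolding OutS_def by (auto simp: less_le_trans[of 0])
    have "u n x \<le> (CL / (?w * norm x ^ DIM('a))) powr (1 / p)"
      by (rule lp_bound[OF nonincr[where n=n] Lp[of n] p0 CL x0])
    also have "\<dots> \<le> (CL / ?w) powr (1 / p) * (2 powr (- ?N / p)) ^ k"
      using x p CL by (intro out_bound) (auto simp: OutS_def DIM_positive Suc_leI)
    finally show ?thesis unfolding bO_def A_def mu_def .
  qed
  have bdd: "\<bar>u n x\<bar> \<le> c * bI k" if "x \<in> InS k" "c \<ge> 1" for n x k c
  proof -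
    have "bI k \<ge> 0" unfolding bI_def using E lam by simp
    then have "bI k \<le> c * bI k" using that by (simp add: mult_le_cancel_right1)
    then show ?thesis using boundI[where n=n, OF that(1)] nonneg[of n x] by linarith
  qed
  have bdd2: "\<bar>u n x\<bar> \<le> c * bO k" if "x \<in> OutS k" "c \<ge> 1" for n x k c
  proof -
    have "bO k \<ge> 0" unfolding bO_def using A mu by simp
    then have "bO k \<le> c * bO k" using that by (simp add: mult_le_cancel_right1)
    then show ?thesis using boundO[where n=n, OF that(1)] nonneg[of n x] by linarith
  qed
  have q1: "lam powr r * (1/2) ^ DIM('a) < 1"
  proof -
    have Np: "?N - p > 0" using p by simp
    have "r * (?N - p) < ?N * p" using r Np by (simp add: pos_less_divide_eq)
    then have "(r * (?N - p)) / p < ?N" using p0 by (simp add: pos_divide_less_eq)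
    moreover have "\<gamma> * r = (r * (?N - p)) / p" unfolding \<gamma>_def by simp
    ultimately have gr: "\<gamma> * r - ?N < 0" by simp
    have a1: "lam powr r = 2 powr (\<gamma> * r)" unfolding lam_def by (simp add: powr_powr)
    have a2: "(1/2::real) ^ DIM('a) = 2 powr (- ?N)" by (simp add: powr_minus powr_realpow power_one_over inverse_eq_divide)
    have "lam powr r * (1/2) ^ DIM('a) = 2 powr (\<gamma> * r - ?N)"
      unfolding a1 a2 by (simp add: powr_add[symmetric])
    also have "\<dots> < 2 powr 0" using gr by (intro powr_less_mono) auto
    finally show ?thesis by simp
  qed
  have q2: "mu powr r * 2 ^ DIM('a) < 1"
  proof -
    have "r / p > 1" using r p0 by (simp add: less_divide_eq)
    then have "?N * (r / p) > ?N * 1" by (intro mult_strict_left_mono) auto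
    then have gr: "- ?N / p * r + ?N < 0" by (simp add: algebra_simps)
    have a1: "mu powr r = 2 powr (- ?N / p * r)" unfolding mu_def by (simp add: powr_powr)
    have a2: "(2::real) ^ DIM('a) = 2 powr ?N" by (simp add: powr_realpow)
    have "mu powr r * 2 ^ DIM('a) = 2 powr (- ?N / p * r + ?N)"
      unfolding a1 a2 by (simp add: powr_add[symmetric])
    also have "\<dots> < 2 powr 0" using gr by (intro powr_less_mono) auto
    finally show ?thesis by simp
  qed
  have Hfin: "(\<integral>\<^sup>+ x. Hd r (\<lambda>k. c * bI k) (\<lambda>k. c * bO k) (x::'a) \<partial>lborel) < \<infinity>" if c: "c \<ge> 0" for c
  proof (rule Hd_finite)
    show "0 \<le> c * bI k" for k unfolding bI_def using c E lam by simp
    show "0 \<le> c * bO k" for k unfolding bO_def using c A mu by simp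
    show "summable (\<lambda>k. (c * bI k) powr r * (?w * ((1/2) ^ k) ^ DIM('a)))"
      unfolding bI_def using c E lam q1 by (intro summable_In) auto
    show "summable (\<lambda>k. (c * bO k) powr r * (?w * (2 ^ Suc k) ^ DIM('a)))"
      unfolding bO_def using c A mu q2 by (intro summable_Out) auto
  qed
  have umeas[measurable]: "u n \<in> borel_measurable lborel" for n
    by (rule radial_borel[OF e nonincr[where n=n]])
  have un_fin: "Lr_pow r (u n) < \<infinity>" for n
  proof -
    have "AE x in lborel. ennreal (\<bar>u n x\<bar> powr r) \<le> Hd r (\<lambda>k. 1 * bI k) (\<lambda>k. 1 * bO k) x"
    proof (rule dom_point[OF _ r0])
      show "AE x in lborel. (\<forall>k. x \<in> InS k \<longrightarrow> \<bar>u n x\<bar> \<le> 1 * bI k) \<and> (\<forall>k. x \<in> OutS k \<longrightarrow> \<bar>u n x\<bar> \<le> 1 * bO k)"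
        by (intro AE_I2 conjI allI impI bdd bdd2) auto
    qed
    then have "Lr_pow r (u n) \<le> (\<integral>\<^sup>+ x. Hd r (\<lambda>k. 1 * bI k) (\<lambda>k. 1 * bO k) (x::'a) \<partial>lborel)"
      unfolding Lr_pow_def by (rule nn_integral_mono_AE)
    then show ?thesis using Hfin[of 1] by (simp add: le_less_trans)
  qed
  show "precompact_Lr r u"
    unfolding precompact_Lr_def
  proof (rule conjI)
    show "\<forall>n. u n \<in> borel_measurable lebesgue \<and> Lr_pow r (u n) < \<infinity>" using meas un_fin by simp
  next
    show "\<forall>s. strict_mono s \<longrightarrow> (\<exists>(t :: nat \<Rightarrow> nat) (g :: 'a \<Rightarrow> real). strict_mono t \<and> g \<in> borel_measurable lebesgue \<and> Lr_pow r g < \<infinity> \<and>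
               ((\<lambda>k. Lr_pow r (\<lambda>x. u (s (t k)) x - g x)) \<longlongrightarrow> 0) sequentially)"
  proof (intro allI impI)
    fix s :: "nat \<Rightarrow> nat" assume s: "strict_mono s"
    define f where "f n t = - u (s n) (exp t *\<^sub>R e)" for n t
    define M where "M t = (CL / (?w * exp t ^ DIM('a))) powr (1 / p)" for t
    have fmono: "mono (f n)" for n
    proof (rule monoI)
      fix t t' :: real assume "t \<le> t'"
      then have "norm (exp t *\<^sub>R e) \<le> norm (exp t' *\<^sub>R e)" using e by simp
      then show "f n t \<le> f n t'" unfolding f_def using nonincr by simp
    qed
    have fbdd: "\<bar>f n t\<bar> \<le> M t" for n t
    proof -
      have "u (s n) (exp t *\<^sub>R e) \<le> (CL / (?w * norm (exp t *\<^sub>R e) ^ DIM('a))) powr (1 / p)"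
        by (rule lp_bound[OF nonincr[where n="s n"] Lp[of "s n"] p0 CL]) (use e in auto)
      then show ?thesis unfolding f_def M_def using e nonneg by simp
    qed
    obtain \<sigma> F where \<sigma>: "strict_mono \<sigma>" and F: "mono F"
      and conv: "\<And>x. continuous (at x) F \<Longrightarrow> (\<lambda>n. f (\<sigma> n) x) \<longlonglongrightarrow> F x"
      using Helly_selection'[of f M, OF fmono fbdd] by blast
    define g where "g x = - F (ln (norm x))" for x :: 'a
    have Fm[measurable]: "F \<in> borel_measurable borel" using F by (rule borel_measurable_mono)
    have gm[measurable]: "g \<in> borel_measurable lborel" unfolding g_def by measurable
    define Disc where "Disc = {a. \<not> isCont F a}"
    have cD: "countable Disc" unfolding Disc_def by (rule mono_ctble_discont[OF F])
    define Z where "Z = sphere (0::'a) 0 \<union> (\<Union>d\<in>Disc. sphere 0 (exp d))"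
    have Z: "Z \<in> null_sets lborel"
      unfolding Z_def by (intro null_sets.Un null_sphere null_sets_UN' cD)
    have cvx: "(\<lambda>k. u (s (\<sigma> k)) x) \<longlonglongrightarrow> g x" if x: "x \<notin> Z" for x
    proof -
      have x0: "x \<noteq> 0" using x unfolding Z_def by auto
      have ct: "isCont F (ln (norm x))"
      proof (rule ccontr)
        assume "\<not> isCont F (ln (norm x))"
        then have "ln (norm x) \<in> Disc" unfolding Disc_def by simp
        moreover have "x \<in> sphere 0 (exp (ln (norm x)))" using x0 by simp
        ultimately show False using x unfolding Z_def by blast
      qed
      have eq: "f (\<sigma> k) (ln (norm x)) = - u (s (\<sigma> k)) x" for k
      proof -
        have "norm (exp (ln (norm x)) *\<^sub>R e) = norm x" using x0 e by simp
        then show ?thesis unfolding f_def using radial by metis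
      qed
      have "(\<lambda>k. - u (s (\<sigma> k)) x) \<longlonglongrightarrow> F (ln (norm x))"
        using conv[OF ct] unfolding eq .
      then have "(\<lambda>k. - (- u (s (\<sigma> k)) x)) \<longlonglongrightarrow> - F (ln (norm x))" by (rule tendsto_minus)
      then show ?thesis unfolding g_def by simp
    qed
    have AEcv: "AE x in lborel. (\<lambda>k. u (s (\<sigma> k)) x) \<longlonglongrightarrow> g x"
      by (rule AE_I'[OF Z]) (use cvx in auto)
    have gbI: "\<bar>g x\<bar> \<le> bI k" if "x \<notin> Z" "x \<in> InS k" for x k
    proof -
      have "(\<lambda>j. \<bar>u (s (\<sigma> j)) x\<bar>) \<longlonglongrightarrow> \<bar>g x\<bar>" using cvx[OF that(1)] by (rule tendsto_rabs)
      moreover have "\<And>j. \<bar>u (s (\<sigma> j)) x\<bar> \<le> bI k" using bdd[where c=1, OF that(2)] by simp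
      ultimately show ?thesis by (intro LIMSEQ_le_const2) auto
    qed
    have gbO: "\<bar>g x\<bar> \<le> bO k" if "x \<notin> Z" "x \<in> OutS k" for x k
    proof -
      have "(\<lambda>j. \<bar>u (s (\<sigma> j)) x\<bar>) \<longlonglongrightarrow> \<bar>g x\<bar>" using cvx[OF that(1)] by (rule tendsto_rabs)
      moreover have "\<And>j. \<bar>u (s (\<sigma> j)) x\<bar> \<le> bO k" using bdd2[where c=1, OF that(2)] by simp
      ultimately show ?thesis by (intro LIMSEQ_le_const2) auto
    qed
    have AEZ: "AE x in lborel. x \<notin> Z" using Z by (rule AE_not_in)
    have g_fin: "Lr_pow r g < \<infinity>"
    proof -
      have "AE x in lborel. ennreal (\<bar>g x\<bar> powr r) \<le> Hd r (\<lambda>k. 1 * bI k) (\<lambda>k. 1 * bO k) x"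
      proof (rule dom_point[OF _ r0])
        show "AE x in lborel. (\<forall>k. x \<in> InS k \<longrightarrow> \<bar>g x\<bar> \<le> 1 * bI k) \<and> (\<forall>k. x \<in> OutS k \<longrightarrow> \<bar>g x\<bar> \<le> 1 * bO k)"
          using AEZ by eventually_elim (auto intro: gbI gbO)
      qed
      then have "Lr_pow r g \<le> (\<integral>\<^sup>+ x. Hd r (\<lambda>k. 1 * bI k) (\<lambda>k. 1 * bO k) (x::'a) \<partial>lborel)"
        unfolding Lr_pow_def by (rule nn_integral_mono_AE)
      then show ?thesis using Hfin[of 1] by (simp add: le_less_trans)
    qed
    have dom2: "AE x in lborel. ennreal (\<bar>u (s (\<sigma> k)) x - g x\<bar> powr r) \<le> Hd r (\<lambda>k. 2 * bI k) (\<lambda>k. 2 * bO k) x" for k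
    proof (rule dom_point[OF _ r0])
      show "AE x in lborel. (\<forall>j. x \<in> InS j \<longrightarrow> \<bar>u (s (\<sigma> k)) x - g x\<bar> \<le> 2 * bI j) \<and>
                            (\<forall>j. x \<in> OutS j \<longrightarrow> \<bar>u (s (\<sigma> k)) x - g x\<bar> \<le> 2 * bO j)"
        using AEZ
      proof eventually_elim
        case (elim x)
        show ?case
        proof (intro conjI allI impI)
          fix j assume j: "x \<in> InS j"
          have "\<bar>u (s (\<sigma> k)) x - g x\<bar> \<le> \<bar>u (s (\<sigma> k)) x\<bar> + \<bar>g x\<bar>" by (rule abs_triangle_ineq4)
          also have "\<dots> \<le> bI j + bI j" using bdd[where c=1, OF j] gbI[OF elim j] by (intro add_mono) auto
          finally show "\<bar>u (s (\<sigma> k)) x - g x\<bar> \<le> 2 * bI j" by simp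
        next
          fix j assume j: "x \<in> OutS j"
          have "\<bar>u (s (\<sigma> k)) x - g x\<bar> \<le> \<bar>u (s (\<sigma> k)) x\<bar> + \<bar>g x\<bar>" by (rule abs_triangle_ineq4)
          also have "\<dots> \<le> bO j + bO j" using bdd2[where c=1, OF j] gbO[OF elim j] by (intro add_mono) auto
          finally show "\<bar>u (s (\<sigma> k)) x - g x\<bar> \<le> 2 * bO j" by simp
        qed
      qed
    qed
    have lim: "(\<lambda>k. Lr_pow r (\<lambda>x. u (s (\<sigma> k)) x - g x)) \<longlonglongrightarrow> 0"
    proof -
      have "(\<lambda>k. \<integral>\<^sup>+ x. ennreal (\<bar>u (s (\<sigma> k)) x - g x\<bar> powr r) \<partial>lborel) \<longlonglongrightarrow> (\<integral>\<^sup>+ (x::'a). 0 \<partial>lborel)"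
      proof (rule nn_integral_dominated_convergence[where u="\<lambda>k x. ennreal (\<bar>u (s (\<sigma> k)) x - g x\<bar> powr r)"
          and u'="\<lambda>x. 0" and w="Hd r (\<lambda>k. 2 * bI k) (\<lambda>k. 2 * bO k)"])
        show "(\<lambda>x. ennreal (\<bar>u (s (\<sigma> k)) x - g x\<bar> powr r)) \<in> borel_measurable lborel" for k by measurable
        show "(\<lambda>x. 0::ennreal) \<in> borel_measurable lborel" by simp
        show "Hd r (\<lambda>k. 2 * bI k) (\<lambda>k. 2 * bO k) \<in> borel_measurable lborel" by measurable
        show "AE x in lborel. ennreal (\<bar>u (s (\<sigma> k)) x - g x\<bar> powr r) \<le> Hd r (\<lambda>k. 2 * bI k) (\<lambda>k. 2 * bO k) x" for k
          by (rule dom2)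
        show "(\<integral>\<^sup>+ x. Hd r (\<lambda>k. 2 * bI k) (\<lambda>k. 2 * bO k) (x::'a) \<partial>lborel) < \<infinity>" by (rule Hfin) simp
        show "AE x in lborel. (\<lambda>k. ennreal (\<bar>u (s (\<sigma> k)) x - g x\<bar> powr r)) \<longlonglongrightarrow> 0"
          using AEcv
        proof eventually_elim
          case (elim x)
          have "(\<lambda>k. u (s (\<sigma> k)) x - g x) \<longlonglongrightarrow> 0" using elim by (simp add: LIM_zero)
          then have "(\<lambda>k. \<bar>u (s (\<sigma> k)) x - g x\<bar>) \<longlonglongrightarrow> 0" by (simp add: tendsto_rabs_zero)
          then have "(\<lambda>k. \<bar>u (s (\<sigma> k)) x - g x\<bar> powr r) \<longlonglongrightarrow> 0"
            by (rule tendsto_zero_powrI) (use r0 in auto)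
          then have "(\<lambda>k. ennreal (\<bar>u (s (\<sigma> k)) x - g x\<bar> powr r)) \<longlonglongrightarrow> ennreal 0"
            by (rule tendsto_ennrealI)
          then show ?case by simp
        qed
      qed
      then show ?thesis unfolding Lr_pow_def by simp
    qed
    have glebesgue: "g \<in> borel_measurable lebesgue" using gm by (rule measurable_completion)
    show "\<exists>t g. strict_mono t \<and> g \<in> borel_measurable lebesgue \<and> Lr_pow r g < \<infinity> \<and>
            ((\<lambda>k. Lr_pow r (\<lambda>x. u (s (t k)) x - g x)) \<longlongrightarrow> 0) sequentially"
      using \<sigma> glebesgue g_fin lim by blast
  qed
  qed
qed


end
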